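(* Let $\mathcal{T}$ satisfy the standing assumptions and let $\overline{F}$ be its tail function. (a) The following are equivalent: (i) $\mathcal{T}^{\mathcal{R}}\leq_{\mathrm{st}}\mathcal{T}$ for all reset laws $\mathcal{R}$; (ii) $\mathcal{T}^{\delta_r}\leq_{\mathrm{st}}\mathcal{T}$ for all $r\in(0,\infty)$; (iii) $\overline{F}$ is supermultiplicative, i.e. $\overline{F}(x+y)\geq \overline{F}(x)\overline{F}(y)$ for all $x,y\in[0,\infty)$ (equivalently, $-\log\overline{F}:[0,\infty)\to[0,\infty]$ is subadditive; equivalently, for all $r,t\in[0,\infty)$ one has $\mathcal{T}((r,\infty])>0$ and $\mathcal{T}(\{s: s-r>t\}\mid (r,\infty])\geq \mathcal{T}((t,\infty])$); (iv) $\mathcal{T}_{\mathcal{R}}\leq_{\mathrm{st}}\mathcal{T}$ for all reset laws $\mathcal{R}$; (v) $\mathcal{T}_{\delta_r}\leq_{\mathrm{st}}\mathcal{T}$ for all $r\in(0,\infty)$. (b) The following are equivalent: (i) $\mathcal{T}^{\mathcal{R}}\geq_{\mathrm{st}}\mathcal{T}$ for all reset laws $\mathcal{R}$; (ii) $\mathcal{T}^{\delta_r}\geq_{\mathrm{st}}\mathcal{T}$ for all $r\in(0,\infty)$; (iii) $\overline{F}$ is submultiplicative, i.e. $\overline{F}(x+y)\leq \overline{F}(x)\overline{F}(y)$ for all $x,y\in[0,\infty)$ (equivalently $-\log\overline{F}$ is superadditive); (iv) $\mathcal{T}_{\mathcal{R}}\geq_{\mathrm{st}}\mathcal{T}$ for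 all reset laws $\mathcal{R}$; (v) $\mathcal{T}_{\delta_r}\geq_{\mathrm{st}}\mathcal{T}$ for all $r\in(0,\infty)$. (c) The following are equivalent: (i) $\mathcal{T}^{\mathcal{R}}=\mathcal{T}$ for all reset laws $\mathcal{R}$; (ii) $\mathcal{T}^{\delta_r}=\mathcal{T}$ for all $r\in(0,\infty)$; (iii) $\overline{F}$ is multiplicative, i.e. $\overline{F}(x+y)=\overline{F}(x)\overline{F}(y)$ for all $x,y\in[0,\infty)$; (iv) $\mathcal{T}_{\mathcal{R}}=\mathcal{T}$ for all reset laws $\mathcal{R}$; (v) $\mathcal{T}_{\delta_r}=\mathcal{T}$ for all $r\in(0,\infty)$. Furthermore, $\overline{F}$ is multiplicative if and only if $\mathcal{T}=\mathrm{Exp}(\lambda)$ for some $\lambda\in(0,\infty)$.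
   Context: Standing assumptions: $\mathcal{T}$ is a probability law on the Borel sets of $[0,\infty]$ with $\mathcal{T}((0,\infty])>0$ and $\inf\mathrm{supp}(\mathcal{T})=0$. Its tail function is $\overline{F}(t):=\mathcal{T}((t,\infty])$ for $t\in[0,\infty)$, with the convention $\overline{F}(\infty):=0$; $\log 0:=-\infty$. A reset law is a probability law $\mathcal{R}$ on the Borel sets of $[0,\infty]$ with $\mathcal{R}((0,\infty])>0$ and $\mathcal{R}([0,\infty))>0$. Given a reset law $\mathcal{R}$: let $(T_k)_{k\in\mathbb{N}}$ be i.i.d. with law $\mathcal{T}$ and $(R_k)_{k\in\mathbb{N}}$ an independent i.i.d. sequence with law $\mathcal{R}$ (all $[0,\infty]$-valued); $\mathcal{T}^{\mathcal{R}}$ is the law of the random time $\tilde T$ defined a.s. by $\tilde T=R_1+\cdots+R_{k-1}+T_k$ on $\{R_1<T_1,\ldots,R_{k-1}<T_{k-1},T_k\leq R_k\}$, $k\in\mathbb{N}$. Further, $\mathcal{T}_{\mathcal{R}}$ is the law of $T_1\mathbf{1}_{\{T_1\leq R\}}+(R+T_2)\mathbf{1}_{\{R<T_1\}}$, where $(T_1,T_2)$ has law $\mathcal{T}\times\mathcal{T}$ and $R$ is independent with law $\mathcal{R}$. For laws $\mathcal{A},\mathcal{B}$ on $[0,\infty]$, $\mathcal{A}\leq_{\mathrm{st}}\mathcal{B}$ (equivalently $\mathcal{B}\geq_{\mathrm{st}}\mathcal{A}$) means $\mathcal{A}((t,\infty])\leq\mathcal{B}((t,\infty])$ for all $t\in[0,\infty)$.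 $\delta_r$ is the Dirac mass at $r$, $\mathrm{Exp}(\lambda)$ the exponential law with mean $\lambda^{-1}$. *)

theory Defs
  imports "HOL-Probability.Probability"
begin

text \<open>Laws on [0,\<infinity>] are measures on the type ennreal with its Borel sets.\<close>

definition base_law :: "ennreal measure \<Rightarrow> bool" where
  "base_law T \<longleftrightarrow> prob_space T \<and> sets T = sets borel \<and> emeasure T {0<..} > 0 \<and>
     (\<forall>e::ennreal. e > 0 \<longrightarrow> emeasure T {..<e} > 0)"
  (* the last conjunct says 0 belongs to the (closed) support, i.e. inf supp T = 0 *)

definition reset_law :: "ennreal measure \<Rightarrow> bool" where
  "reset_law R \<longleftrightarrow> prob_space R \<and> sets R = sets borel \<and> emeasure R {0<..} > 0 \<and>
     emeasure R {..<\<infinity>} > 0"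

definition tail :: "ennreal measure \<Rightarrow> real \<Rightarrow> real" where
  "tail T t = measure T {ennreal t<..}"

definition neglog_tail :: "ennreal measure \<Rightarrow> real \<Rightarrow> ereal" where
  "neglog_tail T t = (if tail T t = 0 then \<infinity> else ereal (- ln (tail T t)))"

definition stoch_le :: "ennreal measure \<Rightarrow> ennreal measure \<Rightarrow> bool" where
  "stoch_le A B \<longleftrightarrow> (\<forall>t::real. t \<ge> 0 \<longrightarrow> measure A {ennreal t<..} \<le> measure B {ennreal t<..})"

text \<open>omega i = (T_(i+1), R_(i+1)); stopping at index k (0-based).\<close>
definition reset_stop :: "(nat \<Rightarrow> ennreal \<times> ennreal) \<Rightarrow> nat \<Rightarrow> bool" where
  "reset_stop \<omega> k \<longleftrightarrow> (\<forall>i<k. snd (\<omega> i) < fst (\<omega> i)) \<and> fst (\<omega> k) \<le> snd (\<omega> k)"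

definition reset_time :: "(nat \<Rightarrow> ennreal \<times> ennreal) \<Rightarrow> ennreal" where
  "reset_time \<omega> = (if \<exists>k. reset_stop \<omega> k
     then (let k = (LEAST k. reset_stop \<omega> k) in (\<Sum>i<k. snd (\<omega> i)) + fst (\<omega> k))
     else \<infinity>)"

text \<open>The law T^R (restart with i.i.d. resets), and T_R (a single reset).\<close>
definition reset_full :: "ennreal measure \<Rightarrow> ennreal measure \<Rightarrow> ennreal measure" where
  "reset_full T R = distr (PiM UNIV (\<lambda>_::nat. T \<Otimes>\<^sub>M R)) borel reset_time"

definition reset_once :: "ennreal measure \<Rightarrow> ennreal measure \<Rightarrow> ennreal measure" where
  "reset_once T R = distr (T \<Otimes>\<^sub>M (T \<Otimes>\<^sub>M R)) borel
     (\<lambda>(t1, t2, r). if t1 \<le> r then t1 else r + t2)"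

definition dirac_law :: "real \<Rightarrow> ennreal measure" where
  "dirac_law r = return borel (ennreal r)"

definition Exp_law :: "real \<Rightarrow> ennreal measure" where
  "Exp_law l = distr (density lborel (exponential_density l)) borel ennreal"

end

theory Submission
  imports Defs
begin


lemma reset_stop_meas[measurable]:
  assumes [measurable]: "fst \<in> borel_measurable M" "snd \<in> borel_measurable M"
  shows "Measurable.pred (PiM UNIV (\<lambda>_::nat. M)) (\<lambda>\<omega>. reset_stop \<omega> k)"
  unfolding reset_stop_def by measurable

lemma reset_time_meas:
  assumes [measurable]: "fst \<in> borel_measurable M" "snd \<in> borel_measurable M"
  shows "reset_time \<in> borel_measurable (PiM UNIV (\<lambda>_::nat. M))"
proof -
  have 1: "(\<lambda>\<omega>. (\<Sum>i<k. snd (\<omega> i)) + fst (\<omega> k)) \<in> borel_measurable (PiM UNIV (\<lambda>_::nat. M))" for k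
    by measurable
  have 2: "(\<lambda>\<omega>. LEAST k. reset_stop \<omega> k) \<in> PiM UNIV (\<lambda>_::nat. M) \<rightarrow>\<^sub>M count_space UNIV"
    by measurable
  have 3: "(\<lambda>\<omega>. (\<Sum>i<(LEAST k. reset_stop \<omega> k). snd (\<omega> i)) + fst (\<omega> (LEAST k. reset_stop \<omega> k)))
     \<in> borel_measurable (PiM UNIV (\<lambda>_::nat. M))"
    by (rule measurable_compose_countable[OF 1 2])
  have 4: "{\<omega> \<in> space (PiM UNIV (\<lambda>_::nat. M)). \<exists>k. reset_stop \<omega> k} \<in> sets (PiM UNIV (\<lambda>_::nat. M))"
    by measurable
  have 5: "reset_time = (\<lambda>\<omega>. if \<exists>k. reset_stop \<omega> k then
     (\<Sum>i<(LEAST k. reset_stop \<omega> k). snd (\<omega> i)) + fst (\<omega> (LEAST k. reset_stop \<omega> k)) else \<infinity>)"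
    by (rule ext) (simp add: reset_time_def Let_def)
  have 6: "(\<lambda>\<omega>::nat\<Rightarrow>ennreal\<times>ennreal. \<infinity>::ennreal) \<in> borel_measurable (PiM UNIV (\<lambda>_::nat. M))"
    by simp
  have 7: "(\<lambda>\<omega>. if \<exists>k. reset_stop \<omega> k then
     (\<Sum>i<(LEAST k. reset_stop \<omega> k). snd (\<omega> i)) + fst (\<omega> (LEAST k. reset_stop \<omega> k)) else \<infinity>) \<in> borel_measurable (PiM UNIV (\<lambda>_::nat. M))"
    using measurable_If[OF 3 6 4] .
  show ?thesis using 7 unfolding 5[symmetric] .
qed

lemma TR_meas:
  assumes "sets T = sets (borel::ennreal measure)" "sets R = sets (borel::ennreal measure)"
  shows "fst \<in> borel_measurable (T \<Otimes>\<^sub>M R)" "snd \<in> borel_measurable (T \<Otimes>\<^sub>M R)"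
proof -
  have "measurable (T \<Otimes>\<^sub>M R) T = measurable (T \<Otimes>\<^sub>M R) borel" by (rule measurable_cong_sets) (simp_all add: assms)
  then show "fst \<in> borel_measurable (T \<Otimes>\<^sub>M R)" using measurable_fst[of T R] by simp
  have "measurable (T \<Otimes>\<^sub>M R) R = measurable (T \<Otimes>\<^sub>M R) borel" by (rule measurable_cong_sets) (simp_all add: assms)
  then show "snd \<in> borel_measurable (T \<Otimes>\<^sub>M R)" using measurable_snd[of T R] by simp
qed


lemma reset_stop_case0: "reset_stop (case_nat s \<omega>) 0 \<longleftrightarrow> fst s \<le> snd s"
  by (simp add: reset_stop_def)

lemma reset_stop_caseSuc: "reset_stop (case_nat s \<omega>) (Suc k) \<longleftrightarrow> snd s < fst s \<and> reset_stop \<omega> k"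
  by (auto simp add: reset_stop_def less_Suc_eq_0_disj)

lemma reset_time_case:
  "reset_time (case_nat s \<omega>) = (if fst s \<le> snd s then fst s else snd s + reset_time \<omega>)"
proof (cases "fst s \<le> snd s")
  case True
  then have "reset_stop (case_nat s \<omega>) 0" by (simp add: reset_stop_case0)
  then have "(LEAST k. reset_stop (case_nat s \<omega>) k) = 0" by (simp add: Least_eq_0)
  then show ?thesis using True \<open>reset_stop (case_nat s \<omega>) 0\<close> by (auto simp: reset_time_def)
next
  case False
  then have ns: "\<not> reset_stop (case_nat s \<omega>) 0" by (simp add: reset_stop_case0)
  have ex: "(\<exists>k. reset_stop (case_nat s \<omega>) k) \<longleftrightarrow> (\<exists>k. reset_stop \<omega> k)"
  proof
    assume "\<exists>k. reset_stop (case_nat s \<omega>) k"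
    then obtain k where k: "reset_stop (case_nat s \<omega>) k" by blast
    with ns obtain j where "k = Suc j" by (cases k) auto
    with k show "\<exists>k. reset_stop \<omega> k" by (auto simp: reset_stop_caseSuc)
  next
    assume "\<exists>k. reset_stop \<omega> k"
    then obtain k where "reset_stop \<omega> k" by blast
    then have "reset_stop (case_nat s \<omega>) (Suc k)" using False by (simp add: reset_stop_caseSuc)
    then show "\<exists>k. reset_stop (case_nat s \<omega>) k" by blast
  qed
  show ?thesis
  proof (cases "\<exists>k. reset_stop \<omega> k")
    case True
    obtain k0 where k0: "reset_stop \<omega> k0" using True by blast
    then have k0': "reset_stop (case_nat s \<omega>) (Suc k0)" using False by (simp add: reset_stop_caseSuc)
    have L: "(LEAST k. reset_stop (case_nat s \<omega>) k) = Suc (LEAST k. reset_stop \<omega> k)"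
      using Least_Suc[of "reset_stop (case_nat s \<omega>)" "Suc k0", OF k0' ns] False
      by (simp add: reset_stop_caseSuc not_le)
    show ?thesis using True ex False unfolding reset_time_def Let_def L
      by (simp add: sum.lessThan_Suc_shift ac_simps del: sum.lessThan_Suc)
  next
    case nT: False
    then show ?thesis using ex False by (simp add: reset_time_def)
  qed
qed

definition phi :: "ennreal measure \<Rightarrow> ennreal set \<Rightarrow> ennreal \<times> ennreal \<Rightarrow> ennreal" where
  "phi H A s = (if fst s \<le> snd s then indicator A (fst s) else emeasure H {x. snd s + x \<in> A})"

locale TRsetup =
  fixes T R :: "ennreal measure"
  assumes PT: "prob_space T" and ST: "sets T = sets borel"
      and PR: "prob_space R" and SR: "sets R = sets borel"
begin

abbreviation "M \<equiv> T \<Otimes>\<^sub>M R"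
abbreviation "S \<equiv> PiM UNIV (\<lambda>_::nat. M)"

lemma PM: "prob_space M"
  using PT PR by (intro prob_space_pair) (auto simp: prob_space_def)

sublocale SQ: sequence_space M
  unfolding sequence_space_def product_prob_space_def product_prob_space_axioms_def product_sigma_finite_def
  using PM by (auto simp: prob_space_imp_sigma_finite)

lemma fstM[measurable]: "fst \<in> borel_measurable M" and sndM[measurable]: "snd \<in> borel_measurable M"
  using TR_meas[OF ST SR] by auto

lemma X_meas[measurable]: "reset_time \<in> borel_measurable S"
  by (rule reset_time_meas[OF fstM sndM])

lemma E1:
  assumes A: "A \<in> sets borel"
  shows "emeasure (reset_full T R) A =
     (\<integral>\<^sup>+ s. (if fst s \<le> snd s then indicator A (fst s) else emeasure (reset_full T R) {x. snd s + x \<in> A}) \<partial>M)"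
proof -
  let ?G = "reset_full T R"
  let ?f = "\<lambda>(s, \<omega>). case_nat s \<omega>"
  have fm: "?f \<in> M \<Otimes>\<^sub>M S \<rightarrow>\<^sub>M S" by measurable
  have XA: "reset_time -` A \<inter> space S \<in> sets S" using A by measurable
  have "emeasure ?G A = emeasure S (reset_time -` A \<inter> space S)"
    unfolding reset_full_def using A by (simp add: emeasure_distr)
  also have "\<dots> = emeasure (distr (M \<Otimes>\<^sub>M S) S ?f) (reset_time -` A \<inter> space S)"
    using SQ.PiM_iter by simp
  also have "\<dots> = emeasure (M \<Otimes>\<^sub>M S) (?f -` (reset_time -` A \<inter> space S) \<inter> space (M \<Otimes>\<^sub>M S))"
    by (rule emeasure_distr[OF fm XA])
  also have "\<dots> = (\<integral>\<^sup>+ s. emeasure S (Pair s -` (?f -` (reset_time -` A \<inter> space S) \<inter> space (M \<Otimes>\<^sub>M S))) \<partial>M)"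
    by (rule SQ.emeasure_pair_measure_alt) (use fm XA in measurable)
  also have "\<dots> = (\<integral>\<^sup>+ s. (if fst s \<le> snd s then indicator A (fst s) else emeasure ?G {x. snd s + x \<in> A}) \<partial>M)"
  proof (rule nn_integral_cong)
    fix s assume s: "s \<in> space M"
    have eq: "Pair s -` (?f -` (reset_time -` A \<inter> space S) \<inter> space (M \<Otimes>\<^sub>M S)) =
       {\<omega> \<in> space S. (if fst s \<le> snd s then fst s else snd s + reset_time \<omega>) \<in> A}"
      using s fm[THEN measurable_space]
      by (auto simp: space_pair_measure reset_time_case)
    show "emeasure S (Pair s -` (?f -` (reset_time -` A \<inter> space S) \<inter> space (M \<Otimes>\<^sub>M S))) =
      (if fst s \<le> snd s then indicator A (fst s) else emeasure ?G {x. snd s + x \<in> A})"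
    proof (cases "fst s \<le> snd s")
      case True
      then show ?thesis unfolding eq by (cases "fst s \<in> A") (simp_all add: SQ.P.emeasure_space_1)
    next
      case False
      have B: "{x. snd s + x \<in> A} \<in> sets borel"
      proof -
        have "(\<lambda>x::ennreal. snd s + x) -` A \<inter> space borel \<in> sets borel" using A by measurable
        then show ?thesis by (simp add: vimage_def)
      qed
      have "emeasure ?G {x. snd s + x \<in> A} = emeasure S (reset_time -` {x. snd s + x \<in> A} \<inter> space S)"
        unfolding reset_full_def using B by (simp add: emeasure_distr)
      then show ?thesis using False unfolding eq by (simp add: vimage_def Int_def conj_commute)
    qed
  qed
  finally show ?thesis .
qed



lemma E1': "A \<in> sets borel \<Longrightarrow> emeasure (reset_full T R) A = (\<integral>\<^sup>+ s. phi (reset_full T R) A s \<partial>M)"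
  unfolding phi_def by (rule E1)

lemma g_meas: "(\<lambda>(t1, t2, r). if t1 \<le> r then t1 else r + t2) \<in> borel_measurable (T \<Otimes>\<^sub>M (T \<Otimes>\<^sub>M R))"
proof -
  have [measurable_cong]: "sets T = sets borel" "sets R = sets borel" using ST SR by auto
  show ?thesis by measurable
qed

end

lemma h_meas:
  assumes "prob_space H" "sets H = sets borel" "A \<in> sets borel"
  shows "(\<lambda>r::ennreal. emeasure H {x. r + x \<in> A}) \<in> borel_measurable borel"
proof -
  interpret H: prob_space H by fact
  have [measurable_cong]: "sets H = sets borel" by fact
  have [measurable]: "A \<in> sets borel" by fact
  have Q: "{p::ennreal\<times>ennreal. fst p + snd p \<in> A} \<in> sets (borel \<Otimes>\<^sub>M H)"
  proof -
    have "{p \<in> space (borel \<Otimes>\<^sub>M H). fst p + snd p \<in> A} \<in> sets (borel \<Otimes>\<^sub>M H)" by measurable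
    then show ?thesis by (simp add: space_pair_measure sets_eq_imp_space_eq[OF assms(2)])
  qed
  from H.measurable_emeasure_Pair[OF Q] show ?thesis by (simp add: vimage_def)
qed

context TRsetup begin

lemma phi_meas:
  assumes "prob_space H" "sets H = sets borel" "A \<in> sets borel"
  shows "phi H A \<in> borel_measurable M"
proof -
  note h_meas[OF assms, measurable]
  have [measurable]: "A \<in> sets borel" by fact
  show ?thesis unfolding phi_def[abs_def] by measurable
qed

lemma E2:
  assumes A: "A \<in> sets borel"
  shows "emeasure (reset_once T R) A = (\<integral>\<^sup>+ s. phi T A s \<partial>M)"
proof -
  interpret T: prob_space T by (rule PT)
  interpret R: prob_space R by (rule PR)
  interpret TR: prob_space M by (rule PM)
  interpret P1: pair_sigma_finite T M by unfold_locales
  interpret P2: pair_sigma_finite T R by unfold_locales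
  let ?g = "\<lambda>(t1, t2, r). if t1 \<le> r then t1 else r + t2"
  have [measurable]: "A \<in> sets borel" by fact
  note g_meas[measurable]
  have ST'[measurable_cong]: "sets T = sets borel" "sets R = sets borel" using ST SR by auto
  have "emeasure (reset_once T R) A = (\<integral>\<^sup>+ \<omega>. indicator A (?g \<omega>) \<partial>(T \<Otimes>\<^sub>M M))"
    unfolding reset_once_def using A
    by (simp add: emeasure_distr nn_integral_indicator[symmetric] nn_integral_distr g_meas del: nn_integral_indicator)
  also have "\<dots> = (\<integral>\<^sup>+ t1. (\<integral>\<^sup>+ p. indicator A (?g (t1, p)) \<partial>M) \<partial>T)"
    by (rule sigma_finite_measure.nn_integral_fst[OF prob_space_imp_sigma_finite[OF PM], symmetric]) measurable
  also have "\<dots> = (\<integral>\<^sup>+ t1. (\<integral>\<^sup>+ r. phi T A (t1, r) \<partial>R) \<partial>T)"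
  proof (rule nn_integral_cong)
    fix t1 assume t1: "t1 \<in> space T"
    have "(\<integral>\<^sup>+ p. indicator A (?g (t1, p)) \<partial>M) = (\<integral>\<^sup>+ r. (\<integral>\<^sup>+ t2. indicator A (?g (t1, t2, r)) \<partial>T) \<partial>R)"
    proof -
      have *: "(\<lambda>p. indicator A (if t1 \<le> snd p then t1 else snd p + fst p) :: ennreal) \<in> borel_measurable M"
        by measurable
      have "(\<lambda>p. indicator A (?g (t1, p)) :: ennreal) = (\<lambda>p. indicator A (if t1 \<le> snd p then t1 else snd p + fst p))"
        by (auto simp: split_beta')
      moreover have "(\<integral>\<^sup>+ y. \<integral>\<^sup>+ x. indicator A (if t1 \<le> y then t1 else y + x) \<partial>T \<partial>R) =
         (\<integral>\<^sup>+ p. indicator A (if t1 \<le> snd p then t1 else snd p + fst p) \<partial>M)"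
        using P2.nn_integral_snd[OF *] by (simp cong: if_cong)
      ultimately show ?thesis by simp
    qed
    also have "\<dots> = (\<integral>\<^sup>+ r. phi T A (t1, r) \<partial>R)"
    proof (rule nn_integral_cong)
      fix r assume r: "r \<in> space R"
      show "(\<integral>\<^sup>+ t2. indicator A (?g (t1, t2, r)) \<partial>T) = phi T A (t1, r)"
      proof (cases "t1 \<le> r")
        case True then show ?thesis by (simp add: phi_def T.emeasure_space_1)
      next
        case False
        have B: "{x. r + x \<in> A} \<in> sets T"
        proof -
          have "(\<lambda>x::ennreal. r + x) -` A \<inter> space borel \<in> sets borel" using A by measurable
          then show ?thesis by (simp add: vimage_def ST)
        qed
        have "(\<integral>\<^sup>+ t2. indicator A (?g (t1, t2, r)) \<partial>T) = (\<integral>\<^sup>+ t2. indicator {x. r + x \<in> A} t2 \<partial>T)"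
          using False by (intro nn_integral_cong) (simp add: indicator_def)
        also have "\<dots> = emeasure T {x. r + x \<in> A}" using B by simp
        finally show ?thesis using False by (simp add: phi_def)
      qed
    qed
    finally show "(\<integral>\<^sup>+ p. indicator A (?g (t1, p)) \<partial>M) = (\<integral>\<^sup>+ r. phi T A (t1, r) \<partial>R)" .
  qed
  also have "\<dots> = (\<integral>\<^sup>+ s. phi T A s \<partial>M)"
    by (rule sigma_finite_measure.nn_integral_fst[OF prob_space_imp_sigma_finite[OF PR]]) (rule phi_meas[OF PT ST A])
  finally show ?thesis .
qed

end
lemma set_shift:
  fixes r :: ennreal
  assumes "r \<le> ennreal t" "0 \<le> t"
  shows "{x. ennreal t < r + x} = {ennreal (t - enn2real r)<..}"
proof -
  obtain \<rho> where r: "r = ennreal \<rho>" "0 \<le> \<rho>" "\<rho> \<le> t"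
    using assms by (metis enn2real_nonneg ennreal_enn2real_if ennreal_le_iff enn2real_ennreal top_neq_ennreal top_unique)
  show ?thesis
  proof (intro set_eqI iffI; simp)
    fix x assume "ennreal t < r + x"
    then show "ennreal (t - enn2real r) < x" using r
      by (cases x rule: ennreal_cases) (auto simp: ennreal_plus[symmetric] ennreal_less_iff simp del: ennreal_plus)
  next
    fix x assume "ennreal (t - enn2real r) < x"
    then show "ennreal t < r + x" using r
      by (cases x rule: ennreal_cases) (auto simp: ennreal_plus[symmetric] ennreal_less_iff simp del: ennreal_plus)
  qed
qed

lemma pfin: "prob_space A \<Longrightarrow> finite_measure A" by (simp add: prob_space_def)

lemma stoch_le_emeasure:
  assumes "prob_space A" "prob_space B"
  shows "stoch_le A B \<longleftrightarrow> (\<forall>t\<ge>0. emeasure A {ennreal t<..} \<le> emeasure B {ennreal t<..})"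
  using finite_measure.emeasure_eq_measure[OF pfin[OF assms(1)]] finite_measure.emeasure_eq_measure[OF pfin[OF assms(2)]]
  by (simp add: stoch_le_def ennreal_le_iff)

lemma space_borelsets: "sets H = sets (borel::'a::topological_space measure) \<Longrightarrow> space H = UNIV"
  using sets_eq_imp_space_eq by fastforce

context TRsetup begin

lemma G_prob: "prob_space (reset_full T R)" and G_sets: "sets (reset_full T R) = sets borel"
  unfolding reset_full_def by (auto intro!: SQ.prob_space_distr)

lemma O_prob: "prob_space (reset_once T R)" and O_sets: "sets (reset_once T R) = sets borel"
proof -
  interpret T: prob_space T by (rule PT)
  have "prob_space (T \<Otimes>\<^sub>M M)" by (rule prob_space_pair[OF PT PM])
  then interpret P3: prob_space "T \<Otimes>\<^sub>M M" .
  show "prob_space (reset_once T R)" unfolding reset_once_def by (rule P3.prob_space_distr[OF g_meas])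
  show "sets (reset_once T R) = sets borel" unfolding reset_once_def by simp
qed

lemma phi_le:
  assumes H1: "prob_space H1" "sets H1 = sets borel" and H2: "prob_space H2" "sets H2 = sets borel"
    and t: "0 \<le> t" and d: "\<And>u. 0 \<le> u \<Longrightarrow> emeasure H1 {ennreal u<..} \<le> emeasure H2 {ennreal u<..} + d"
  shows "phi H1 {ennreal t<..} s \<le> phi H2 {ennreal t<..} s + d * indicator {s. snd s < fst s} s"
proof (cases "fst s \<le> snd s")
  case True then show ?thesis by (simp add: phi_def)
next
  case False
  show ?thesis
  proof (cases "ennreal t < snd s")
    case True
    then have "{x. snd s + x \<in> {ennreal t<..}} = UNIV"
      by (auto intro: order_less_le_trans[OF _ add_increasing2])
    then show ?thesis using False prob_space.emeasure_space_1[OF H1(1)] prob_space.emeasure_space_1[OF H2(1)]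
      space_borelsets[OF H1(2)] space_borelsets[OF H2(2)]
      by (simp add: phi_def)
  next
    case nT: False
    then have le: "snd s \<le> ennreal t" by simp
    have e: "{x. snd s + x \<in> {ennreal t<..}} = {ennreal (t - enn2real (snd s))<..}"
      using set_shift[OF le t] by simp
    have "enn2real (snd s) \<le> t" using enn2real_mono[OF le] t by simp
    then have "emeasure H1 {ennreal (t - enn2real (snd s))<..} \<le> emeasure H2 {ennreal (t - enn2real (snd s))<..} + d"
      by (intro d) simp
    then show ?thesis using False unfolding phi_def e by simp
  qed
qed

lemma int_le:
  assumes H1: "prob_space H1" "sets H1 = sets borel" and H2: "prob_space H2" "sets H2 = sets borel"
    and t: "0 \<le> t" and d: "\<And>u. 0 \<le> u \<Longrightarrow> emeasure H1 {ennreal u<..} \<le> emeasure H2 {ennreal u<..} + d"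
  shows "(\<integral>\<^sup>+ s. phi H1 {ennreal t<..} s \<partial>M) \<le> (\<integral>\<^sup>+ s. phi H2 {ennreal t<..} s \<partial>M) + d * emeasure M {s. snd s < fst s}"
proof -
  have Q: "{s. snd s < fst s} \<in> sets M"
  proof -
    have "{s \<in> space M. snd s < fst s} \<in> sets M" by measurable
    then show ?thesis using space_pair_measure[of T R] space_borelsets[OF ST] space_borelsets[OF SR] by simp
  qed
  have "(\<integral>\<^sup>+ s. phi H1 {ennreal t<..} s \<partial>M) \<le> (\<integral>\<^sup>+ s. phi H2 {ennreal t<..} s + d * indicator {s. snd s < fst s} s \<partial>M)"
    by (intro nn_integral_mono phi_le[OF H1 H2 t d])
  also have "\<dots> = (\<integral>\<^sup>+ s. phi H2 {ennreal t<..} s \<partial>M) + (\<integral>\<^sup>+ s. d * indicator {s. snd s < fst s} s \<partial>M)"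
    by (rule nn_integral_add) (use phi_meas[OF H2] Q in auto)
  also have "(\<integral>\<^sup>+ s. d * indicator {s. snd s < fst s} s \<partial>M) = d * emeasure M {s. snd s < fst s}"
    using Q by (simp add: nn_integral_cmult_indicator)
  finally show ?thesis .
qed

end

lemma contraction:
  fixes a b :: "real \<Rightarrow> ennreal" and q :: ennreal
  assumes a1: "\<And>u. 0 \<le> u \<Longrightarrow> a u \<le> 1" and q: "q < 1"
    and step: "\<And>d u. (\<And>u. 0 \<le> u \<Longrightarrow> a u \<le> b u + d) \<Longrightarrow> 0 \<le> u \<Longrightarrow> a u \<le> b u + d * q"
  shows "\<And>u. 0 \<le> u \<Longrightarrow> a u \<le> b u"
proof -
  define D where "D = (SUP u\<in>{0..}. (a u - b u))"
  have l1: "(x::ennreal) \<le> y + (x - y)" for x y by (metis add.commute diff_add_self_ennreal linear)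
  have 1: "a u \<le> b u + D" if "0 \<le> u" for u
  proof -
    have "a u - b u \<le> D" unfolding D_def using that by (intro SUP_upper) auto
    then show ?thesis using l1[of "a u" "b u"] by (meson add_left_mono order_trans)
  qed
  have 2: "a u - b u \<le> D * q" if "0 \<le> u" for u
  proof -
    have "a u \<noteq> \<top>" using a1[OF that] by (metis ennreal_one_neq_top top_unique)
    then show ?thesis using step[OF 1 that] by (simp add: ennreal_minus_le_iff add.commute)
  qed
  have DDq: "D \<le> D * q" unfolding D_def by (rule SUP_least) (use 2 D_def in auto)
  have "D \<le> 1" unfolding D_def
    by (rule SUP_least) (metis a1 atLeast_iff diff_le_self_ennreal order_trans)
  then have Dtop: "D < \<top>" using order_le_less_trans ennreal_one_less_top by blast
  have D0: "D = 0" using DDq q Dtop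
    by (metis ennreal_mult_strict_left_mono less_le more_arith_simps(6) not_less zero_order(3))
  fix u :: real assume u: "0 \<le> u"
  have "a u - b u \<le> 0" using 2[OF u] D0 by simp
  moreover have "a u < \<top>" using a1[OF u] order_le_less_trans ennreal_one_less_top by blast
  ultimately show "a u \<le> b u" using diff_eq_0_iff_ennreal le_zero_eq by blast
qed

context TRsetup begin

lemma q_lt1:
  assumes BT: "base_law T" and RR: "reset_law R"
  shows "emeasure M {s. snd s < fst s} < 1"
proof -
  interpret T: prob_space T by (rule PT)
  interpret R: prob_space R by (rule PR)
  interpret MM: prob_space M by (rule PM)
  let ?N = "\<lambda>n::nat. {ennreal (inverse (real (Suc n)))..}"
  have "\<exists>n. emeasure R (?N n) \<noteq> 0"
  proof (rule ccontr)
    assume "\<not> ?thesis"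
    then have "emeasure R (\<Union>n. ?N n) = 0" by (intro emeasure_UN_eq_0) (auto simp: SR)
    moreover have "(\<Union>n. ?N n) = {0<..}"
    proof (intro set_eqI iffI)
      fix x assume "x \<in> (\<Union>n. ?N n)"
      then show "x \<in> {0<..}" by (auto intro: order_less_le_trans[rotated])
    next
      fix x :: ennreal assume "x \<in> {0<..}"
      then have x: "0 < x" by simp
      show "x \<in> (\<Union>n. ?N n)"
      proof (cases x rule: ennreal_cases)
        case (real y)
        then have "0 < y" using x by simp
        from ex_inverse_of_nat_less[OF this] obtain n where n: "0 < n" "inverse (real n) < y" by auto
        then obtain m where "n = Suc m" by (cases n) auto
        then have "ennreal (inverse (real (Suc m))) \<le> x" using n real by (simp add: ennreal_leI)
        then show ?thesis by auto
      next
        case top then show ?thesis by (auto intro!: exI[of _ 0])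
      qed
    qed
    ultimately show False using RR by (simp add: reset_law_def)
  qed
  then obtain n where Rn: "emeasure R (?N n) > 0" by (auto simp: zero_less_iff_neq_zero)
  define e where "e = ennreal (inverse (real (Suc n)))"
  have e0: "e > 0" unfolding e_def by simp
  have Te: "emeasure T {..<e} > 0" using BT e0 by (simp add: base_law_def)
  let ?B = "{..<e} \<times> ?N n"
  have B: "emeasure M ?B = emeasure T {..<e} * emeasure R (?N n)"
    by (rule R.emeasure_pair_measure_Times) (auto simp: ST SR)
  have "emeasure M ?B > 0" unfolding B using Te Rn by (simp add: ennreal_zero_less_mult_iff)
  moreover have "?B \<subseteq> {s. fst s \<le> snd s}" unfolding e_def by auto
  moreover have C: "{s. fst s \<le> snd s} \<in> sets M"
  proof -
    have "{s \<in> space M. fst s \<le> snd s} \<in> sets M" by measurable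
    then show ?thesis using space_pair_measure[of T R] space_borelsets[OF ST] space_borelsets[OF SR] by simp
  qed
  ultimately have Cpos: "emeasure M {s. fst s \<le> snd s} > 0"
    by (metis emeasure_mono order_less_le_trans)
  have spM: "space M = UNIV" using space_pair_measure[of T R] space_borelsets[OF ST] space_borelsets[OF SR] by simp
  have "{s. snd s < fst s} = space M - {s. fst s \<le> snd s}" using spM by auto
  then have "emeasure M {s. snd s < fst s} = 1 - emeasure M {s. fst s \<le> snd s}"
    using emeasure_compl[OF C] prob_space.emeasure_space_1[OF PM] by simp
  moreover have "emeasure M {s. fst s \<le> snd s} \<le> 1" by (rule prob_space.emeasure_le_1[OF PM])
  ultimately show ?thesis using Cpos
    by (simp add: ennreal_between)
qed

lemma full_le_of_once:
  assumes BT: "base_law T" and RR: "reset_law R"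
    and once: "\<And>t. 0 \<le> t \<Longrightarrow> emeasure (reset_once T R) {ennreal t<..} \<le> emeasure T {ennreal t<..}"
  shows "\<And>t. 0 \<le> t \<Longrightarrow> emeasure (reset_full T R) {ennreal t<..} \<le> emeasure T {ennreal t<..}"
proof (rule contraction[OF _ q_lt1[OF BT RR]])
  fix u :: real assume "0 \<le> u"
  show "emeasure (reset_full T R) {ennreal u<..} \<le> 1" using prob_space.emeasure_le_1[OF G_prob] .
next
  fix d and u :: real
  assume d: "\<And>u. 0 \<le> u \<Longrightarrow> emeasure (reset_full T R) {ennreal u<..} \<le> emeasure T {ennreal u<..} + d"
    and u: "0 \<le> u"
  have "emeasure (reset_full T R) {ennreal u<..} = (\<integral>\<^sup>+ s. phi (reset_full T R) {ennreal u<..} s \<partial>M)"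
    by (rule E1') simp
  also have "\<dots> \<le> (\<integral>\<^sup>+ s. phi T {ennreal u<..} s \<partial>M) + d * emeasure M {s. snd s < fst s}"
    by (rule int_le[OF G_prob G_sets PT ST u d])
  also have "(\<integral>\<^sup>+ s. phi T {ennreal u<..} s \<partial>M) = emeasure (reset_once T R) {ennreal u<..}"
    by (rule E2[symmetric]) simp
  finally show "emeasure (reset_full T R) {ennreal u<..} \<le> emeasure T {ennreal u<..} + d * emeasure M {s. snd s < fst s}"
    using once[OF u] by (meson add_right_mono order_trans)
qed

lemma full_ge_of_once:
  assumes BT: "base_law T" and RR: "reset_law R"
    and once: "\<And>t. 0 \<le> t \<Longrightarrow> emeasure T {ennreal t<..} \<le> emeasure (reset_once T R) {ennreal t<..}"
  shows "\<And>t. 0 \<le> t \<Longrightarrow> emeasure T {ennreal t<..} \<le> emeasure (reset_full T R) {ennreal t<..}"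
proof (rule contraction[OF _ q_lt1[OF BT RR]])
  fix u :: real assume "0 \<le> u"
  show "emeasure T {ennreal u<..} \<le> 1" using prob_space.emeasure_le_1[OF PT] .
next
  fix d and u :: real
  assume d: "\<And>u. 0 \<le> u \<Longrightarrow> emeasure T {ennreal u<..} \<le> emeasure (reset_full T R) {ennreal u<..} + d"
    and u: "0 \<le> u"
  have "emeasure T {ennreal u<..} \<le> emeasure (reset_once T R) {ennreal u<..}" by (rule once[OF u])
  also have "\<dots> = (\<integral>\<^sup>+ s. phi T {ennreal u<..} s \<partial>M)"
    by (rule E2) simp
  also have "\<dots> \<le> (\<integral>\<^sup>+ s. phi (reset_full T R) {ennreal u<..} s \<partial>M) + d * emeasure M {s. snd s < fst s}"
    by (rule int_le[OF PT ST G_prob G_sets u d])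
  also have "(\<integral>\<^sup>+ s. phi (reset_full T R) {ennreal u<..} s \<partial>M) = emeasure (reset_full T R) {ennreal u<..}"
    by (rule E1'[symmetric]) simp
  finally show "emeasure T {ennreal u<..} \<le> emeasure (reset_full T R) {ennreal u<..} + d * emeasure M {s. snd s < fst s}" .
qed

end

lemma inner:
  assumes PT: "prob_space T" and ST: "sets T = sets borel" and PH: "prob_space H" "sets H = sets borel"
  shows "(\<integral>\<^sup>+ t1. phi H {ennreal t<..} (t1, r) \<partial>T) =
     emeasure T {ennreal t<..r} + emeasure T {r<..} * emeasure H {x. ennreal t < r + x}"
proof -
  have "(\<integral>\<^sup>+ t1. phi H {ennreal t<..} (t1, r) \<partial>T) =
     (\<integral>\<^sup>+ t1. indicator {ennreal t<..r} t1 + emeasure H {x. ennreal t < r + x} * indicator {r<..} t1 \<partial>T)"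
    by (intro nn_integral_cong) (auto simp: phi_def indicator_def)
  also have "\<dots> = (\<integral>\<^sup>+ t1. indicator {ennreal t<..r} t1 \<partial>T) + (\<integral>\<^sup>+ t1. emeasure H {x. ennreal t < r + x} * indicator {r<..} t1 \<partial>T)"
  proof -
    have mc: "borel_measurable T = borel_measurable borel" by (rule measurable_cong_sets[OF ST refl])
    show ?thesis by (rule nn_integral_add) (unfold mc, measurable)
  qed
  also have "\<dots> = emeasure T {ennreal t<..r} + emeasure T {r<..} * emeasure H {x. ennreal t < r + x}"
    using nn_integral_cmult_indicator[of "{r<..}" T "emeasure H {x. ennreal t < r + x}"]
    by (simp add: ST mult.commute)
  finally show ?thesis .
qed

lemma K_big:
  assumes PH: "prob_space H" "sets H = sets borel" and "ennreal t < r"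
  shows "emeasure H {x. ennreal t < r + x} = 1"
proof -
  have "{x. ennreal t < r + x} = UNIV" using assms(3)
    by (auto intro: order_less_le_trans[OF _ add_increasing2])
  then show ?thesis using prob_space.emeasure_space_1[OF PH(1)] space_borelsets[OF PH(2)] by simp
qed

lemma K_small:
  assumes "r \<le> ennreal t" "0 \<le> t"
  shows "emeasure H {x. ennreal t < r + x} = emeasure H {ennreal (t - enn2real r)<..}"
  using set_shift[OF assms] by simp

lemma once_formula:
  assumes PT: "prob_space T" and ST: "sets T = sets borel" and t: "0 \<le> t"
  shows "(\<integral>\<^sup>+ t1. phi T {ennreal t<..} (t1, r) \<partial>T) =
    (if ennreal t < r then emeasure T {ennreal t<..}
     else emeasure T {ennreal (enn2real r)<..} * emeasure T {ennreal (t - enn2real r)<..})"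
proof (cases "ennreal t < r")
  case True
  have "emeasure T {ennreal t<..r} + emeasure T {r<..} = emeasure T ({ennreal t<..r} \<union> {r<..})"
    by (rule plus_emeasure) (auto simp: ST)
  also have "{ennreal t<..r} \<union> {r<..} = {ennreal t<..}" using True by auto
  finally show ?thesis using True inner[OF PT ST PT ST] K_big[OF PT ST True] by simp
next
  case False
  then have le: "r \<le> ennreal t" by simp
  then have "r < \<top>" using ennreal_less_top order_le_less_trans by blast
  then have r: "r = ennreal (enn2real r)" by simp
  have "{ennreal t<..r} = {}" using le by auto
  then show ?thesis using False inner[OF PT ST PT ST, of t r] K_small[OF le t, of T] r by (metis add.left_neutral emeasure_empty)
qed


lemma Fe_tail: "prob_space T \<Longrightarrow> emeasure T {ennreal u<..} = ennreal (tail T u)"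
  by (simp add: tail_def finite_measure.emeasure_eq_measure[OF pfin])

lemma once_pt:
  assumes PT: "prob_space T" and ST: "sets T = sets borel" and t: "0 \<le> t"
  shows "(\<integral>\<^sup>+ t1. phi T {ennreal t<..} (t1, r) \<partial>T) =
    (if ennreal t < r then ennreal (tail T t)
     else ennreal (tail T (enn2real r) * tail T (t - enn2real r)))"
    and "\<not> ennreal t < r \<Longrightarrow> 0 \<le> enn2real r \<and> 0 \<le> t - enn2real r \<and> enn2real r + (t - enn2real r) = t"
proof -
  show "(\<integral>\<^sup>+ t1. phi T {ennreal t<..} (t1, r) \<partial>T) =
    (if ennreal t < r then ennreal (tail T t)
     else ennreal (tail T (enn2real r) * tail T (t - enn2real r)))"
    unfolding once_formula[OF PT ST t] Fe_tail[OF PT]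
    by (simp add: ennreal_mult tail_def)
  assume "\<not> ennreal t < r"
  then have "r \<le> ennreal t" by simp
  then have "enn2real r \<le> t" using enn2real_mono[of r "ennreal t"] t by simp
  then show "0 \<le> enn2real r \<and> 0 \<le> t - enn2real r \<and> enn2real r + (t - enn2real r) = t" by simp
qed

context TRsetup begin

lemma E2_iter:
  assumes t: "0 \<le> t"
  shows "emeasure (reset_once T R) {ennreal t<..} = (\<integral>\<^sup>+ r. (\<integral>\<^sup>+ t1. phi T {ennreal t<..} (t1, r) \<partial>T) \<partial>R)"
proof -
  interpret P2: pair_sigma_finite T R
    using PT PR by (simp add: pair_sigma_finite_def prob_space_imp_sigma_finite)
  show ?thesis unfolding E2[of "{ennreal t<..}", simplified]
    by (rule P2.nn_integral_snd[symmetric]) (rule phi_meas[OF PT ST], simp)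
qed

lemma once_le_super:
  assumes SM: "\<forall>x y. x \<ge> 0 \<longrightarrow> y \<ge> 0 \<longrightarrow> tail T (x + y) \<ge> tail T x * tail T y" and t: "0 \<le> t"
  shows "emeasure (reset_once T R) {ennreal t<..} \<le> emeasure T {ennreal t<..}"
proof -
  have "emeasure (reset_once T R) {ennreal t<..} \<le> (\<integral>\<^sup>+ r. ennreal (tail T t) \<partial>R)"
    unfolding E2_iter[OF t]
  proof (rule nn_integral_mono)
    fix r
    show "(\<integral>\<^sup>+ t1. phi T {ennreal t<..} (t1, r) \<partial>T) \<le> ennreal (tail T t)"
    proof (cases "ennreal t < r")
      case False
      then show ?thesis unfolding once_pt(1)[OF PT ST t] using once_pt(2)[OF PT ST t False] SM
        by (metis ennreal_leI)
    qed (simp add: once_pt(1)[OF PT ST t])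
  qed
  also have "\<dots> = emeasure T {ennreal t<..}" using Fe_tail[OF PT] prob_space.emeasure_space_1[OF PR] by simp
  finally show ?thesis .
qed

lemma once_ge_sub:
  assumes SM: "\<forall>x y. x \<ge> 0 \<longrightarrow> y \<ge> 0 \<longrightarrow> tail T (x + y) \<le> tail T x * tail T y" and t: "0 \<le> t"
  shows "emeasure T {ennreal t<..} \<le> emeasure (reset_once T R) {ennreal t<..}"
proof -
  have "(\<integral>\<^sup>+ r. ennreal (tail T t) \<partial>R) \<le> emeasure (reset_once T R) {ennreal t<..}"
    unfolding E2_iter[OF t]
  proof (rule nn_integral_mono)
    fix r
    show "ennreal (tail T t) \<le> (\<integral>\<^sup>+ t1. phi T {ennreal t<..} (t1, r) \<partial>T)"
    proof (cases "ennreal t < r")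
      case False
      then show ?thesis unfolding once_pt(1)[OF PT ST t] using once_pt(2)[OF PT ST t False] SM
        by (metis ennreal_leI)
    qed (simp add: once_pt(1)[OF PT ST t])
  qed
  also have "(\<integral>\<^sup>+ r. ennreal (tail T t) \<partial>R) = emeasure T {ennreal t<..}" using Fe_tail[OF PT] prob_space.emeasure_space_1[OF PR] by simp
  finally show ?thesis .
qed

end

lemma dirac_prob: "prob_space (dirac_law r)" and dirac_sets: "sets (dirac_law r) = sets borel"
  unfolding dirac_law_def by (auto intro!: prob_space_return)

lemma dirac_reset: "0 < r \<Longrightarrow> reset_law (dirac_law r)"
  unfolding reset_law_def dirac_law_def using dirac_prob[of r] unfolding dirac_law_def
  by (auto simp: emeasure_return)

lemma TRsetup_dirac: "prob_space T \<Longrightarrow> sets T = sets borel \<Longrightarrow> TRsetup T (dirac_law r)"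
  unfolding TRsetup_def using dirac_prob dirac_sets by auto

lemma dirac_int:
  assumes PT: "prob_space T" and ST: "sets T = sets borel" and f: "f \<in> borel_measurable (T \<Otimes>\<^sub>M dirac_law r)"
  shows "(\<integral>\<^sup>+ s. f s \<partial>(T \<Otimes>\<^sub>M dirac_law r)) = (\<integral>\<^sup>+ t1. f (t1, ennreal r) \<partial>T)"
proof -
  interpret D: prob_space "dirac_law r" by (rule dirac_prob)
  have "(\<integral>\<^sup>+ s. f s \<partial>(T \<Otimes>\<^sub>M dirac_law r)) = (\<integral>\<^sup>+ t1. (\<integral>\<^sup>+ y. f (t1, y) \<partial>dirac_law r) \<partial>T)"
    by (rule D.nn_integral_fst[symmetric]) (rule f)
  also have "\<dots> = (\<integral>\<^sup>+ t1. f (t1, ennreal r) \<partial>T)"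
  proof (rule nn_integral_cong)
    fix t1 assume t1: "t1 \<in> space T"
    have m: "(\<lambda>y. f (t1, y)) \<in> borel_measurable (dirac_law r)"
      using measurable_Pair2[OF f t1] .
    have m': "(\<lambda>y. f (t1, y)) \<in> borel_measurable borel"
      using m by (simp add: dirac_law_def)
    show "(\<integral>\<^sup>+ y. f (t1, y) \<partial>dirac_law r) = f (t1, ennreal r)"
      unfolding dirac_law_def by (rule nn_integral_return) (simp_all add: m')
  qed
  finally show ?thesis .
qed

lemma dirac_full_emeasure:
  assumes PT: "prob_space T" and ST: "sets T = sets borel" and t: "0 \<le> t"
  shows "emeasure (reset_full T (dirac_law r)) {ennreal t<..} =
     emeasure T {ennreal t<..ennreal r} + emeasure T {ennreal r<..} * emeasure (reset_full T (dirac_law r)) {x. ennreal t < ennreal r + x}"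
proof -
  interpret TRsetup T "dirac_law r" by (rule TRsetup_dirac[OF PT ST])
  have "emeasure (reset_full T (dirac_law r)) {ennreal t<..} = (\<integral>\<^sup>+ s. phi (reset_full T (dirac_law r)) {ennreal t<..} s \<partial>M)"
    by (rule E1') simp
  also have "\<dots> = (\<integral>\<^sup>+ t1. phi (reset_full T (dirac_law r)) {ennreal t<..} (t1, ennreal r) \<partial>T)"
    by (rule dirac_int[OF PT ST]) (rule phi_meas[OF G_prob G_sets], simp)
  also have "\<dots> = emeasure T {ennreal t<..ennreal r} + emeasure T {ennreal r<..} * emeasure (reset_full T (dirac_law r)) {x. ennreal t < ennreal r + x}"
    by (rule inner[OF PT ST G_prob G_sets])
  finally show ?thesis .
qed

lemma dirac_once_emeasure:
  assumes PT: "prob_space T" and ST: "sets T = sets borel" and t: "0 \<le> t"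
  shows "emeasure (reset_once T (dirac_law r)) {ennreal t<..} = (\<integral>\<^sup>+ t1. phi T {ennreal t<..} (t1, ennreal r) \<partial>T)"
proof -
  interpret TRsetup T "dirac_law r" by (rule TRsetup_dirac[OF PT ST])
  show ?thesis unfolding E2[of "{ennreal t<..}", simplified]
    by (rule dirac_int[OF PT ST]) (rule phi_meas[OF PT ST], simp)
qed


lemma meas_eq_tails:
  assumes PA: "prob_space A" "sets A = sets (borel::ennreal measure)" and PB: "prob_space B" "sets B = sets (borel::ennreal measure)"
    and eq: "\<And>t. 0 \<le> t \<Longrightarrow> measure A {ennreal t<..} = measure B {ennreal t<..}"
  shows "A = B"
proof -
  let ?E = "insert UNIV (range greaterThan) :: ennreal set set"
  have SE: "sigma_sets UNIV ?E = sigma_sets UNIV (range greaterThan)"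
  proof
    show "sigma_sets UNIV ?E \<subseteq> sigma_sets UNIV (range greaterThan)"
      by (rule sigma_sets_mono) (auto intro: sigma_sets_top sigma_sets.Basic)
    show "sigma_sets UNIV (range greaterThan) \<subseteq> sigma_sets UNIV ?E"
      by (rule sigma_sets_mono') auto
  qed
  have sb: "sets (borel::ennreal measure) = sigma_sets UNIV ?E"
    unfolding SE by (subst borel_Ioi) simp
  show ?thesis
  proof (rule measure_eqI_generator_eq[where E="?E" and \<Omega>=UNIV and A="\<lambda>_. UNIV"])
    show "Int_stable ?E"
    proof (rule Int_stableI)
      fix X Y assume "X \<in> ?E" "Y \<in> ?E"
      moreover have "{a<..} \<inter> {b<..} \<in> ?E" for a b :: ennreal
      proof -
        have "{a<..} \<inter> {b<..} = {max a b<..}" by auto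
        then show ?thesis by blast
      qed
      ultimately show "X \<inter> Y \<in> ?E" by auto
    qed
    show "?E \<subseteq> Pow UNIV" by auto
    show "sets A = sigma_sets UNIV ?E" using PA sb by simp
    show "sets B = sigma_sets UNIV ?E" using PB sb by simp
    show "range (\<lambda>_. UNIV) \<subseteq> ?E" by auto
    show "(\<Union>i::nat. UNIV) = (UNIV::ennreal set)" by simp
    show "emeasure A UNIV \<noteq> \<infinity>" for i::nat using prob_space.emeasure_space_1[OF PA(1)] space_borelsets[OF PA(2)] by simp
    fix X assume "X \<in> ?E"
    then consider "X = UNIV" | a where "X = {a<..}" by auto
    then show "emeasure A X = emeasure B X"
    proof cases
      case 1 then show ?thesis using prob_space.emeasure_space_1[OF PA(1)] space_borelsets[OF PA(2)]
          prob_space.emeasure_space_1[OF PB(1)] space_borelsets[OF PB(2)] by simp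
    next
      case (2 a)
      show ?thesis
      proof (cases a rule: ennreal_cases)
        case (real t)
        then show ?thesis using eq[of t] 2 finite_measure.emeasure_eq_measure[OF pfin[OF PA(1)]]
          finite_measure.emeasure_eq_measure[OF pfin[OF PB(1)]] by simp
      next
        case top
        then have "X = {}" using 2 by auto
        then show ?thesis by simp
      qed
    qed
  qed
qed

lemma tail_nonneg: "0 \<le> tail T t" by (simp add: tail_def)

lemma tail_le1: "prob_space T \<Longrightarrow> tail T t \<le> 1"
  by (simp add: tail_def prob_space.prob_le_1)

lemma tail_mono:
  assumes "prob_space T" "sets T = sets borel" "0 \<le> x" "x \<le> y"
  shows "tail T y \<le> tail T x"
  unfolding tail_def using assms
  by (intro finite_measure.finite_measure_mono[OF pfin]) (auto simp: ennreal_leI intro: order_le_less_trans)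

lemma tail_rc:
  assumes PT: "prob_space T" and ST: "sets T = sets borel" and x: "0 \<le> x"
    and b: "\<And>n::nat. tail T (x + inverse (real (Suc n))) \<le> b"
  shows "tail T x \<le> b"
proof -
  let ?A = "\<lambda>n::nat. {ennreal (x + inverse (real (Suc n)))<..}"
  have inc: "incseq ?A"
  proof (rule incseq_SucI)
    fix n :: nat
    have "inverse (real (Suc (Suc n))) \<le> inverse (real (Suc n))" by (simp add: field_simps)
    then have "ennreal (x + inverse (real (Suc (Suc n)))) \<le> ennreal (x + inverse (real (Suc n)))"
      by (intro ennreal_leI) simp
    then show "?A n \<subseteq> ?A (Suc n)" by auto
  qed
  have U: "(\<Union>n. ?A n) = {ennreal x<..}"
  proof (intro set_eqI iffI)
    fix y assume "y \<in> (\<Union>n. ?A n)"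
    then obtain n where "ennreal (x + inverse (real (Suc n))) < y" by auto
    moreover have "ennreal x \<le> ennreal (x + inverse (real (Suc n)))" by (intro ennreal_leI) simp
    ultimately show "y \<in> {ennreal x<..}" by simp
  next
    fix y assume "y \<in> {ennreal x<..}"
    then have y: "ennreal x < y" by simp
    show "y \<in> (\<Union>n. ?A n)"
    proof (cases y rule: ennreal_cases)
      case (real z)
      then have "x < z" using y x by (simp add: ennreal_less_iff)
      then have "0 < z - x" by simp
      from ex_inverse_of_nat_less[OF this] obtain n where n: "0 < n" "inverse (real n) < z - x" by auto
      then obtain m where m: "n = Suc m" by (cases n) auto
      then have "x + inverse (real (Suc m)) < z" using n by simp
      then have "ennreal (x + inverse (real (Suc m))) < y" using real x
        by (simp add: ennreal_less_iff del: ennreal_plus)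
      then show ?thesis by auto
    next
      case top then show ?thesis by (auto intro!: exI[of _ 0])
    qed
  qed
  have "emeasure T {ennreal x<..} = (SUP n. emeasure T (?A n))"
    unfolding U[symmetric] by (rule SUP_emeasure_incseq[symmetric, OF _ inc]) (auto simp: ST)
  also have "\<dots> \<le> ennreal b"
    by (rule SUP_least) (use b Fe_tail[OF PT] in \<open>auto simp: ennreal_leI\<close>)
  finally have "ennreal (tail T x) \<le> ennreal b" using Fe_tail[OF PT] by simp
  moreover have "0 \<le> b" using b[of 0] tail_nonneg[of T] order_trans by blast
  ultimately show ?thesis by simp
qed


lemma dirac_full_tail:
  assumes PT: "prob_space T" and ST: "sets T = sets borel" and t: "0 \<le> t" and \<rho>: "0 \<le> \<rho>"
  shows "t < \<rho> \<Longrightarrow> measure (reset_full T (dirac_law \<rho>)) {ennreal t<..} = tail T t"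
    and "\<rho> \<le> t \<Longrightarrow> measure (reset_full T (dirac_law \<rho>)) {ennreal t<..} = tail T \<rho> * measure (reset_full T (dirac_law \<rho>)) {ennreal (t - \<rho>)<..}"
proof -
  interpret TRsetup T "dirac_law \<rho>" by (rule TRsetup_dirac[OF PT ST])
  let ?G = "reset_full T (dirac_law \<rho>)"
  have eG: "emeasure ?G A = ennreal (measure ?G A)" for A using finite_measure.emeasure_eq_measure[OF pfin[OF G_prob]] .
  note F = dirac_full_emeasure[OF PT ST t, of \<rho>]
  {
    assume lt: "t < \<rho>"
    then have lt': "ennreal t < ennreal \<rho>" using t by (simp add: ennreal_less_iff)
    have "emeasure T {ennreal t<..ennreal \<rho>} + emeasure T {ennreal \<rho><..} = emeasure T ({ennreal t<..ennreal \<rho>} \<union> {ennreal \<rho><..})"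
      by (rule plus_emeasure) (auto simp: ST)
    also have "{ennreal t<..ennreal \<rho>} \<union> {ennreal \<rho><..} = {ennreal t<..}" using lt' by auto
    finally have "emeasure ?G {ennreal t<..} = emeasure T {ennreal t<..}"
      using F K_big[OF G_prob G_sets lt'] by simp
    then show "measure ?G {ennreal t<..} = tail T t" using Fe_tail[OF PT] eG by (simp add: tail_nonneg)
  }
  {
    assume le: "\<rho> \<le> t"
    then have le': "ennreal \<rho> \<le> ennreal t" by (simp add: ennreal_leI)
    have "{ennreal t<..ennreal \<rho>} = {}" using le' by auto
    then have "emeasure ?G {ennreal t<..} = emeasure T {ennreal \<rho><..} * emeasure ?G {ennreal (t - \<rho>)<..}"
      using F K_small[OF le' t, of ?G] \<rho> by simp
    then have "ennreal (measure ?G {ennreal t<..}) = ennreal (tail T \<rho> * measure ?G {ennreal (t - \<rho>)<..})"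
      using Fe_tail[OF PT] eG by (simp add: ennreal_mult tail_nonneg)
    then show "measure ?G {ennreal t<..} = tail T \<rho> * measure ?G {ennreal (t - \<rho>)<..}"
      by (simp add: tail_nonneg)
  }
qed

lemma dirac_once_tail:
  assumes PT: "prob_space T" and ST: "sets T = sets borel" and t: "0 \<le> t" and \<rho>: "0 \<le> \<rho>" "\<rho> \<le> t"
  shows "measure (reset_once T (dirac_law \<rho>)) {ennreal t<..} = tail T \<rho> * tail T (t - \<rho>)"
proof -
  interpret TRsetup T "dirac_law \<rho>" by (rule TRsetup_dirac[OF PT ST])
  have n: "\<not> ennreal t < ennreal \<rho>" using \<rho> t by (simp add: ennreal_less_iff)
  have "emeasure (reset_once T (dirac_law \<rho>)) {ennreal t<..} = ennreal (tail T \<rho> * tail T (t - \<rho>))"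
    unfolding dirac_once_emeasure[OF PT ST t] once_pt(1)[OF PT ST t] using n \<rho> by simp
  then show ?thesis using finite_measure.emeasure_eq_measure[OF pfin[OF O_prob]]
    by (simp add: tail_nonneg)
qed

locale BT =
  fixes T :: "ennreal measure"
  assumes base: "base_law T"
begin

lemma PT: "prob_space T" and ST: "sets T = sets borel" using base by (auto simp: base_law_def)

abbreviation "f \<equiv> tail T"

lemma f_nn: "0 \<le> f x" by (rule tail_nonneg)
lemma f_le1: "f x \<le> 1" by (rule tail_le1[OF PT])
lemma f_mono: "0 \<le> x \<Longrightarrow> x \<le> y \<Longrightarrow> f y \<le> f x" by (rule tail_mono[OF PT ST])
lemma f_rc: "0 \<le> x \<Longrightarrow> (\<And>n::nat. f (x + inverse (real (Suc n))) \<le> b) \<Longrightarrow> f x \<le> b"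
  by (rule tail_rc[OF PT ST])
lemma f0: "0 < f 0"
proof -
  have "emeasure T {ennreal 0<..} > 0" using base by (simp add: base_law_def)
  then show ?thesis using Fe_tail[OF PT, of 0] by simp
qed

lemma f0_one:
  assumes H: "\<And>\<rho>. 0 < \<rho> \<Longrightarrow> f \<rho> \<le> f \<rho> * f 0"
  shows "f 0 = 1"
proof (rule ccontr)
  assume "f 0 \<noteq> 1"
  then have l: "f 0 < 1" using f_le1 by (simp add: less_le)
  have z: "f \<rho> \<le> 0" if "0 < \<rho>" for \<rho>
  proof -
    have "f \<rho> * (1 - f 0) \<le> 0" using H[OF that] by (simp add: algebra_simps)
    then show ?thesis using l f_nn[of \<rho>] by (simp add: mult_le_0_iff)
  qed
  have "f 0 \<le> 0" by (rule f_rc) (auto intro: z)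
  then show False using f0 by simp
qed

lemma SM_of_once:
  assumes H: "\<And>x y. 0 < x \<Longrightarrow> 0 \<le> y \<Longrightarrow> f x * f y \<le> f (x + y)"
  shows "\<forall>x y. x \<ge> 0 \<longrightarrow> y \<ge> 0 \<longrightarrow> f (x + y) \<ge> f x * f y"
proof (intro allI impI)
  fix x y :: real assume x: "x \<ge> 0" and y: "y \<ge> 0"
  show "f (x + y) \<ge> f x * f y"
  proof (cases "x = 0")
    case True
    then show ?thesis using mult_left_le_one_le[OF f_nn[of y] f_nn[of 0] f_le1[of 0]] by simp
  qed (use H x y in auto)
qed

lemma SUB_of_once:
  assumes H: "\<And>x y. 0 < x \<Longrightarrow> 0 \<le> y \<Longrightarrow> f (x + y) \<le> f x * f y"
  shows "\<forall>x y. x \<ge> 0 \<longrightarrow> y \<ge> 0 \<longrightarrow> f (x + y) \<le> f x * f y"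
proof -
  have one: "f 0 = 1" by (rule f0_one) (use H[of _ 0] in simp)
  show ?thesis
  proof (intro allI impI)
    fix x y :: real assume x: "x \<ge> 0" and y: "y \<ge> 0"
    show "f (x + y) \<le> f x * f y"
    proof (cases "x = 0")
      case True
      then show ?thesis using one by simp
    qed (use H x y in auto)
  qed
qed

lemma SM_of_full:
  assumes H: "\<And>\<rho> u. 0 < \<rho> \<Longrightarrow> 0 \<le> u \<Longrightarrow> u < \<rho> \<Longrightarrow> f \<rho> * f u \<le> f (\<rho> + u)"
  shows "\<forall>x y. x \<ge> 0 \<longrightarrow> y \<ge> 0 \<longrightarrow> f (x + y) \<ge> f x * f y"
proof -
  have key: "f x * f y \<le> f (x + y)" if x: "0 \<le> x" and xy: "x \<le> y" for x y
  proof (cases "f x = 0")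
    case False
    then have fx: "0 < f x" using f_nn[of x] by simp
    have "f y \<le> f (x + y) / f x"
    proof (rule f_rc)
      show "0 \<le> y" using x xy by simp
      fix n :: nat
      let ?e = "inverse (real (Suc n))"
      have e: "0 < ?e" by simp
      have "f (y + ?e) * f x \<le> f (y + ?e + x)"
        by (rule H) (use x xy e in linarith)+
      also have "\<dots> \<le> f (x + y)" by (rule f_mono) (use x xy e in linarith)+
      finally show "f (y + ?e) \<le> f (x + y) / f x" using fx by (simp add: field_simps)
    qed
    then show ?thesis using fx by (simp add: field_simps)
  qed (simp add: f_nn)
  show ?thesis
  proof (intro allI impI)
    fix x y :: real assume x: "x \<ge> 0" and y: "y \<ge> 0"
    show "f (x + y) \<ge> f x * f y"
    proof (cases "x \<le> y")
      case True then show ?thesis using key x by simp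
    next
      case False then show ?thesis using key[of y x] y by (simp add: ac_simps)
    qed
  qed
qed

lemma SUB_of_full:
  assumes H: "\<And>\<rho> u. 0 < \<rho> \<Longrightarrow> 0 \<le> u \<Longrightarrow> u < \<rho> \<Longrightarrow> f (\<rho> + u) \<le> f \<rho> * f u"
  shows "\<forall>x y. x \<ge> 0 \<longrightarrow> y \<ge> 0 \<longrightarrow> f (x + y) \<le> f x * f y"
proof -
  have key: "f (x + y) \<le> f x * f y" if x: "0 \<le> x" and xy: "x \<le> y" for x y
  proof (rule f_rc)
    show "0 \<le> x + y" using x xy by simp
    fix n :: nat
    let ?e = "inverse (real (Suc n))"
    have e: "0 < ?e" by simp
    have "f (x + y + ?e) = f ((y + ?e) + x)" by (simp add: ac_simps)
    also have "\<dots> \<le> f (y + ?e) * f x" by (rule H) (use x xy e in linarith)+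
    also have "\<dots> \<le> f y * f x" by (rule mult_right_mono[OF f_mono f_nn]) (use x xy e in linarith)+
    finally show "f (x + y + ?e) \<le> f x * f y" by (simp add: ac_simps)
  qed
  show ?thesis
  proof (intro allI impI)
    fix x y :: real assume x: "x \<ge> 0" and y: "y \<ge> 0"
    show "f (x + y) \<le> f x * f y"
    proof (cases "x \<le> y")
      case True then show ?thesis using key x by simp
    next
      case False then show ?thesis using key[of y x] y by (simp add: ac_simps)
    qed
  qed
qed

end

lemma cond_set:
  assumes r: "0 \<le> r" and t: "0 \<le> t"
  shows "{s. s - ennreal r > ennreal t} \<inter> {ennreal r<..} = {ennreal (r + t)<..}"
proof (intro set_eqI)
  fix s :: ennreal
  show "s \<in> {s. s - ennreal r > ennreal t} \<inter> {ennreal r<..} \<longleftrightarrow> s \<in> {ennreal (r + t)<..}"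
  proof (cases s rule: ennreal_cases)
    case (real z)
    then show ?thesis using r t
      by (auto simp: ennreal_minus ennreal_less_iff simp del: ennreal_plus)
  next
    case top then show ?thesis by (simp add: ennreal_minus_top)
  qed
qed

lemma nl_sub:
  fixes a b c :: real
  assumes "0 \<le> a" "0 \<le> b" "0 \<le> c"
  shows "((if c = 0 then \<infinity> else ereal (- ln c)) \<le> (if a = 0 then \<infinity> else ereal (- ln a)) + (if b = 0 then \<infinity> else ereal (- ln b)))
     \<longleftrightarrow> a * b \<le> c"
proof (cases "a = 0 \<or> b = 0")
  case True then show ?thesis using assms by auto
next
  case False
  then have a: "0 < a" and b: "0 < b" using assms by auto
  show ?thesis
  proof (cases "c = 0")
    case True then show ?thesis using a b by (simp add: mult_pos_pos not_le)
  next
    case False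
    then have c: "0 < c" using assms by simp
    have "(- ln c \<le> - ln a + - ln b) \<longleftrightarrow> ln (a * b) \<le> ln c" using a b by (simp add: ln_mult) arith
    also have "\<dots> \<longleftrightarrow> a * b \<le> c" using a b c by simp
    finally show ?thesis using a b c by simp
  qed
qed

lemma nl_sup:
  fixes a b c :: real
  assumes "0 \<le> a" "0 \<le> b" "0 \<le> c" "c \<le> a" "c \<le> b"
  shows "((if c = 0 then \<infinity> else ereal (- ln c)) \<ge> (if a = 0 then \<infinity> else ereal (- ln a)) + (if b = 0 then \<infinity> else ereal (- ln b)))
     \<longleftrightarrow> c \<le> a * b"
proof (cases "c = 0")
  case True then show ?thesis using assms by simp
next
  case False
  then have c: "0 < c" using assms by simp
  then have a: "0 < a" and b: "0 < b" using assms by auto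
  have "(- ln c \<ge> - ln a + - ln b) \<longleftrightarrow> ln c \<le> ln (a * b)" using a b by (simp add: ln_mult) arith
  also have "\<dots> \<longleftrightarrow> c \<le> a * b" using a b c by simp
  finally show ?thesis using a b c by simp
qed

lemma Exp_prob: "0 < l \<Longrightarrow> prob_space (Exp_law l)" and Exp_sets: "sets (Exp_law l) = sets borel"
proof -
  assume l: "0 < l"
  interpret D: prob_space "density lborel (exponential_density l)" by (rule prob_space_exponential_density[OF l])
  show "prob_space (Exp_law l)" unfolding Exp_law_def by (rule D.prob_space_distr) simp
qed (simp add: Exp_law_def)

lemma Exp_tail:
  assumes l: "0 < l" and t: "0 \<le> t"
  shows "tail (Exp_law l) t = exp (- l * t)"
proof -
  let ?D = "density lborel (exponential_density l)"
  interpret D: prob_space ?D by (rule prob_space_exponential_density[OF l])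
  have pre: "ennreal -` {ennreal t<..} \<inter> space ?D = UNIV - {..t}"
    using t by (auto simp: ennreal_less_iff)
  have "tail (Exp_law l) t = measure ?D (ennreal -` {ennreal t<..} \<inter> space ?D)"
    unfolding tail_def Exp_law_def by (rule measure_distr) auto
  also have "\<dots> = 1 - measure ?D {..t}" unfolding pre using D.prob_compl[of "{..t}"] by simp
  also have "measure ?D {..t} = 1 - exp (- l * t)"
  proof -
    have "exp (- (l * t)) \<le> 1" using l t by simp
    then show ?thesis
      unfolding measure_def using emeasure_erlang_density[OF l, of 0 t] t by (simp add: erlang_CDF_0)
  qed
  finally show ?thesis by simp
qed

context BT begin

lemma f_pos:
  assumes SM: "\<forall>x y. x \<ge> 0 \<longrightarrow> y \<ge> 0 \<longrightarrow> f (x + y) \<ge> f x * f y" and r: "0 \<le> r"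
  shows "0 < f r"
proof -
  have "\<exists>n. 0 < f (inverse (real (Suc n)))"
  proof (rule ccontr)
    assume "\<not> ?thesis"
    then have "\<And>n. f (0 + inverse (real (Suc n))) \<le> 0" using f_nn by (simp add: not_less)
    then have "f 0 \<le> 0" by (rule f_rc[rotated]) simp
    then show False using f0 by simp
  qed
  then obtain n where pos: "0 < f (inverse (real (Suc n)))" by blast
  define \<delta> where "\<delta> = inverse (real (Suc n))"
  have d: "0 < \<delta>" unfolding \<delta>_def by simp
  have kpos: "0 < f (real k * \<delta>)" for k
  proof (induction k)
    case 0 then show ?case using f0 by simp
  next
    case (Suc k)
    have "f (real k * \<delta>) * f \<delta> \<le> f (real k * \<delta> + \<delta>)" using SM d by auto
    moreover have "0 < f (real k * \<delta>) * f \<delta>" using Suc pos \<delta>_def by simp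
    ultimately show ?case by (simp add: algebra_simps)
  qed
  obtain k where k: "r / \<delta> \<le> real k" using real_arch_simple by blast
  then have "r \<le> real k * \<delta>" using d by (simp add: field_simps)
  then have "f (real k * \<delta>) \<le> f r" using r by (intro f_mono) auto
  then show ?thesis using kpos[of k] by simp
qed

lemma cond_iff:
  "(\<forall>r t. r \<ge> 0 \<longrightarrow> t \<ge> 0 \<longrightarrow> measure T {ennreal r<..} > 0 \<and>
             measure T ({s. s - ennreal r > ennreal t} \<inter> {ennreal r<..}) / measure T {ennreal r<..}
               \<ge> measure T {ennreal t<..})
   \<longleftrightarrow> (\<forall>x y. x \<ge> 0 \<longrightarrow> y \<ge> 0 \<longrightarrow> f (x + y) \<ge> f x * f y)" (is "?L \<longleftrightarrow> ?R")
proof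
  assume L: ?L
  show ?R
  proof (intro allI impI)
    fix x y :: real assume x: "0 \<le> x" and y: "0 \<le> y"
    have h: "0 < measure T {ennreal x<..} \<and> measure T ({s. s - ennreal x > ennreal y} \<inter> {ennreal x<..}) / measure T {ennreal x<..} \<ge> measure T {ennreal y<..}"
      using L x y by blast
    have "0 < f x \<and> f y \<le> f (x + y) / f x" using h unfolding cond_set[OF x y] tail_def by (simp del: ennreal_plus)
    then have "f y * f x \<le> f (x + y)" using pos_le_divide_eq[of "f x" "f y" "f (x+y)"] by auto
    then show "f x * f y \<le> f (x + y)" by (simp add: mult.commute)
  qed
next
  assume R: ?R
  show ?L
  proof (intro allI impI)
    fix r t :: real assume r: "0 \<le> r" and t: "0 \<le> t"
    have p: "0 < f r" by (rule f_pos[OF R r])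
    have "f r * f t \<le> f (r + t)" using R r t by auto
    then have "f t * f r \<le> f (r + t)" by (simp add: mult.commute)
    then have "f t \<le> f (r + t) / f r" using p pos_le_divide_eq[of "f r" "f t" "f (r+t)"] by auto
    then show "measure T {ennreal r<..} > 0 \<and>
             measure T ({s. s - ennreal r > ennreal t} \<inter> {ennreal r<..}) / measure T {ennreal r<..}
               \<ge> measure T {ennreal t<..}"
      using p unfolding cond_set[OF r t] tail_def by (simp del: ennreal_plus)
  qed
qed

lemma neglog_sub_iff:
  "(\<forall>x y. x \<ge> 0 \<longrightarrow> y \<ge> 0 \<longrightarrow> neglog_tail T (x + y) \<le> neglog_tail T x + neglog_tail T y)
   \<longleftrightarrow> (\<forall>x y. x \<ge> 0 \<longrightarrow> y \<ge> 0 \<longrightarrow> f (x + y) \<ge> f x * f y)"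
  unfolding neglog_tail_def using nl_sub[OF f_nn f_nn f_nn] by simp

lemma neglog_sup_iff:
  "(\<forall>x y. x \<ge> 0 \<longrightarrow> y \<ge> 0 \<longrightarrow> neglog_tail T (x + y) \<ge> neglog_tail T x + neglog_tail T y)
   \<longleftrightarrow> (\<forall>x y. x \<ge> 0 \<longrightarrow> y \<ge> 0 \<longrightarrow> f (x + y) \<le> f x * f y)"
proof -
  have "\<And>x y. x \<ge> 0 \<Longrightarrow> y \<ge> 0 \<Longrightarrow>
     (neglog_tail T (x + y) \<ge> neglog_tail T x + neglog_tail T y) \<longleftrightarrow> f (x + y) \<le> f x * f y"
    unfolding neglog_tail_def by (rule nl_sup[OF f_nn f_nn f_nn f_mono f_mono]) auto
  then show ?thesis by blast
qed

end

context BT begin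

lemma exp_of_mult:
  assumes MU: "\<forall>x y. x \<ge> 0 \<longrightarrow> y \<ge> 0 \<longrightarrow> f (x + y) = f x * f y"
  shows "\<exists>l>0. T = Exp_law l"
proof -
  have SM: "\<forall>x y. x \<ge> 0 \<longrightarrow> y \<ge> 0 \<longrightarrow> f (x + y) \<ge> f x * f y" using MU by simp
  have pos: "0 < f x" if "0 \<le> x" for x using f_pos[OF SM that] .
  define g where "g x = - ln (f x)" for x
  have add: "g (x + y) = g x + g y" if "0 \<le> x" "0 \<le> y" for x y
    using MU that pos[of x] pos[of y] by (simp add: g_def ln_mult)
  have mono: "g x \<le> g y" if "0 \<le> x" "x \<le> y" for x y
  proof -
    have "f y \<le> f x" using f_mono that by blast
    then show ?thesis using pos[of x] pos[of y] that by (simp add: g_def)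
  qed
  have gn: "g (real n * x) = real n * g x" if x: "0 \<le> x" for n x
  proof (induction n)
    case 0
    have "f 0 = f 0 * f 0" using MU by (metis add.right_neutral order_refl)
    then have "f 0 = 1" using f0 by simp
    then show ?case by (simp add: g_def)
  next
    case (Suc n)
    have "g (real (Suc n) * x) = g (real n * x + x)" by (simp add: algebra_simps)
    also have "\<dots> = g (real n * x) + g x" by (rule add) (use x in auto)
    finally show ?case using Suc by (simp add: algebra_simps)
  qed
  define c where "c = g 1"
  have g0: "g 0 = 0" using gn[of 0 0] by simp
  have c0: "0 \<le> c" unfolding c_def using mono[of 0 1] g0 by simp
  have gkN: "g (real k / real (Suc m)) = real k * c / real (Suc m)" for k m
  proof -
    have "g 1 = g (real (Suc m) * (1 / real (Suc m)))" by simp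
    also have "\<dots> = real (Suc m) * g (1 / real (Suc m))" by (rule gn) simp
    finally have "g (1 / real (Suc m)) = c / real (Suc m)" unfolding c_def by (simp add: field_simps)
    moreover have "g (real k / real (Suc m)) = real k * g (1 / real (Suc m))"
      using gn[of "1 / real (Suc m)" k] by simp
    ultimately show ?thesis by simp
  qed
  have glin: "g x = c * x" if x: "0 \<le> x" for x
  proof -
    have bnd: "\<bar>g x - c * x\<bar> \<le> c / real (Suc m)" for m
    proof -
      let ?N = "real (Suc m)"
      define k where "k = nat \<lfloor>?N * x\<rfloor>"
      have Nx: "0 \<le> ?N * x" using x by simp
      have k1: "real k \<le> ?N * x" unfolding k_def using Nx by (simp add: of_nat_nat)
      have k2: "?N * x < real k + 1" unfolding k_def using Nx by (simp add: of_nat_nat)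
      have lo: "real k / ?N \<le> x" using k1 by (simp add: field_simps)
      have hi: "x \<le> real (Suc k) / ?N" using k2 by (simp add: field_simps)
      have "g (real k / ?N) \<le> g x" by (rule mono) (use lo in auto)
      then have A: "real k * c / ?N \<le> g x" using gkN[of k m] by (simp only:)
      have "g x \<le> g (real (Suc k) / ?N)" by (rule mono) (use x hi in auto)
      then have B: "g x \<le> real (Suc k) * c / ?N" using gkN[of "Suc k" m] by (simp only:)
      have C: "real k * c / ?N \<le> c * x" using mult_left_mono[OF lo c0] by (simp add: field_simps)
      have D: "c * x \<le> real (Suc k) * c / ?N" using mult_left_mono[OF hi c0] by (simp add: field_simps)
      have E: "real (Suc k) * c / ?N = real k * c / ?N + c / ?N"
        by (simp only: of_nat_Suc distrib_right add_divide_distrib mult_1)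
      show ?thesis using A B C D E by linarith
    qed
    show ?thesis
    proof (rule ccontr)
      assume ne: "g x \<noteq> c * x"
      then have dpos: "0 < \<bar>g x - c * x\<bar> / (c + 1)" using c0 by simp
      from ex_inverse_of_nat_less[OF dpos] obtain n where n: "0 < n" "inverse (real n) < \<bar>g x - c * x\<bar> / (c + 1)" by auto
      then obtain m where m: "n = Suc m" by (cases n) auto
      have "c / real (Suc m) \<le> (c + 1) * inverse (real (Suc m))" by (simp add: field_simps)
      also have "\<dots> < (c + 1) * (\<bar>g x - c * x\<bar> / (c + 1))" using n m c0 by (intro mult_strict_left_mono) auto
      also have "\<dots> = \<bar>g x - c * x\<bar>" using c0 by simp
      finally show False using bnd[of m] by simp
    qed
  qed
  have fexp: "f x = exp (- c * x)" if "0 \<le> x" for x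
  proof -
    have "f x = exp (ln (f x))" using pos[OF that] by simp
    also have "ln (f x) = - g x" by (simp add: g_def)
    finally show ?thesis using glin[OF that] by simp
  qed
  have cpos: "0 < c"
  proof (rule ccontr)
    assume "\<not> 0 < c"
    then have "c = 0" using c0 by simp
    then have f1: "f 1 = 1" using fexp[of 1] by simp
    interpret T: prob_space T by (rule PT)
    have "measure T (space T - {ennreal 1<..}) = 1 - measure T {ennreal 1<..}"
      by (rule T.prob_compl) (simp add: ST)
    then have "measure T (space T - {ennreal 1<..}) = 0" using f1 by (simp add: tail_def)
    moreover have "{..<ennreal 1} \<subseteq> space T - {ennreal 1<..}" using space_borelsets[OF ST] by auto
    ultimately have "measure T {..<ennreal 1} = 0"
      by (metis T.finite_measure_mono ST sets.Diff sets.top atMost_borel greaterThan_borel measure_nonneg order_antisym)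
    then have "emeasure T {..<ennreal 1} = 0" using T.emeasure_eq_measure by simp
    moreover have "emeasure T {..<ennreal 1} > 0" using base by (simp add: base_law_def)
    ultimately show False by simp
  qed
  have "T = Exp_law c"
    by (rule meas_eq_tails[OF PT ST Exp_prob[OF cpos] Exp_sets])
       (use fexp Exp_tail[OF cpos] in \<open>simp add: tail_def\<close>)
  then show ?thesis using cpos by blast
qed

end

lemma stoch_antisym:
  assumes "prob_space A" "sets A = sets borel" "prob_space B" "sets B = sets borel" "stoch_le A B" "stoch_le B A"
  shows "A = B"
  by (rule meas_eq_tails[OF assms(1-4)]) (use assms(5,6) in \<open>auto simp: stoch_le_def intro: antisym\<close>)

lemma stoch_refl: "stoch_le A A" by (simp add: stoch_le_def)

context BT begin

lemma per_R_SM: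
  assumes RR: "reset_law R" and SM: "\<forall>x y. x \<ge> 0 \<longrightarrow> y \<ge> 0 \<longrightarrow> f (x + y) \<ge> f x * f y"
  shows "stoch_le (reset_once T R) T" "stoch_le (reset_full T R) T"
proof -
  interpret TRsetup T R using PT ST RR by (auto simp: TRsetup_def reset_law_def)
  show "stoch_le (reset_once T R) T" unfolding stoch_le_emeasure[OF O_prob PT]
    using once_le_super[OF SM] by auto
  show "stoch_le (reset_full T R) T" unfolding stoch_le_emeasure[OF G_prob PT]
    using full_le_of_once[OF base RR once_le_super[OF SM]] by auto
qed

lemma per_R_SUB:
  assumes RR: "reset_law R" and SB: "\<forall>x y. x \<ge> 0 \<longrightarrow> y \<ge> 0 \<longrightarrow> f (x + y) \<le> f x * f y"
  shows "stoch_le T (reset_once T R)" "stoch_le T (reset_full T R)"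
proof -
  interpret TRsetup T R using PT ST RR by (auto simp: TRsetup_def reset_law_def)
  show "stoch_le T (reset_once T R)" unfolding stoch_le_emeasure[OF PT O_prob]
    using once_ge_sub[OF SB] by auto
  show "stoch_le T (reset_full T R)" unfolding stoch_le_emeasure[OF PT G_prob]
    using full_ge_of_once[OF base RR once_ge_sub[OF SB]] by auto
qed

lemma dfull_tail_2:
  assumes "0 < \<rho>" "0 \<le> u" "u < \<rho>"
  shows "measure (reset_full T (dirac_law \<rho>)) {ennreal (\<rho> + u)<..} = f \<rho> * f u"
  using dirac_full_tail(2)[OF PT ST, of "\<rho> + u" \<rho>] dirac_full_tail(1)[OF PT ST, of u \<rho>] assms by simp

lemma dirac_full_le:
  assumes H: "\<forall>r>0. stoch_le (reset_full T (dirac_law r)) T"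
  shows "\<forall>x y. x \<ge> 0 \<longrightarrow> y \<ge> 0 \<longrightarrow> f (x + y) \<ge> f x * f y"
proof (rule SM_of_full)
  fix \<rho> u :: real assume a: "0 < \<rho>" "0 \<le> u" "u < \<rho>"
  have "measure (reset_full T (dirac_law \<rho>)) {ennreal (\<rho> + u)<..} \<le> measure T {ennreal (\<rho> + u)<..}"
    using H a unfolding stoch_le_def by (metis add_nonneg_nonneg less_imp_le)
  then show "f \<rho> * f u \<le> f (\<rho> + u)" using dfull_tail_2[OF a] by (simp add: tail_def)
qed

lemma dirac_full_ge:
  assumes H: "\<forall>r>0. stoch_le T (reset_full T (dirac_law r))"
  shows "\<forall>x y. x \<ge> 0 \<longrightarrow> y \<ge> 0 \<longrightarrow> f (x + y) \<le> f x * f y"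
proof (rule SUB_of_full)
  fix \<rho> u :: real assume a: "0 < \<rho>" "0 \<le> u" "u < \<rho>"
  have "measure T {ennreal (\<rho> + u)<..} \<le> measure (reset_full T (dirac_law \<rho>)) {ennreal (\<rho> + u)<..}"
    using H a unfolding stoch_le_def by (metis add_nonneg_nonneg less_imp_le)
  then show "f (\<rho> + u) \<le> f \<rho> * f u" using dfull_tail_2[OF a] by (simp add: tail_def)
qed

lemma dirac_once_le:
  assumes H: "\<forall>r>0. stoch_le (reset_once T (dirac_law r)) T"
  shows "\<forall>x y. x \<ge> 0 \<longrightarrow> y \<ge> 0 \<longrightarrow> f (x + y) \<ge> f x * f y"
proof (rule SM_of_once)
  fix x y :: real assume a: "0 < x" "0 \<le> y"
  have "measure (reset_once T (dirac_law x)) {ennreal (x + y)<..} \<le> measure T {ennreal (x + y)<..}"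
    using H a unfolding stoch_le_def by (metis add_nonneg_nonneg less_imp_le)
  then show "f x * f y \<le> f (x + y)" using dirac_once_tail[OF PT ST, of "x + y" x] a by (simp add: tail_def)
qed

lemma dirac_once_ge:
  assumes H: "\<forall>r>0. stoch_le T (reset_once T (dirac_law r))"
  shows "\<forall>x y. x \<ge> 0 \<longrightarrow> y \<ge> 0 \<longrightarrow> f (x + y) \<le> f x * f y"
proof (rule SUB_of_once)
  fix x y :: real assume a: "0 < x" "0 \<le> y"
  have "measure T {ennreal (x + y)<..} \<le> measure (reset_once T (dirac_law x)) {ennreal (x + y)<..}"
    using H a unfolding stoch_le_def by (metis add_nonneg_nonneg less_imp_le)
  then show "f (x + y) \<le> f x * f y" using dirac_once_tail[OF PT ST, of "x + y" x] a by (simp add: tail_def)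
qed

end
theorem proposition2p5:
  fixes T :: "ennreal measure"
  assumes "base_law T"
  shows
   "((\<forall>R. reset_law R \<longrightarrow> stoch_le (reset_full T R) T)
      \<longleftrightarrow> (\<forall>r>0. stoch_le (reset_full T (dirac_law r)) T))
    \<and> ((\<forall>R. reset_law R \<longrightarrow> stoch_le (reset_full T R) T)
      \<longleftrightarrow> (\<forall>x y. x \<ge> 0 \<longrightarrow> y \<ge> 0 \<longrightarrow> tail T (x + y) \<ge> tail T x * tail T y))
    \<and> ((\<forall>R. reset_law R \<longrightarrow> stoch_le (reset_full T R) T)
      \<longleftrightarrow> (\<forall>x y. x \<ge> 0 \<longrightarrow> y \<ge> 0 \<longrightarrow>
             neglog_tail T (x + y) \<le> neglog_tail T x + neglog_tail T y))
    \<and> ((\<forall>R. reset_law R \<longrightarrow> stoch_le (reset_full T R) T)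
      \<longleftrightarrow> (\<forall>r t. r \<ge> 0 \<longrightarrow> t \<ge> 0 \<longrightarrow> measure T {ennreal r<..} > 0 \<and>
             measure T ({s. s - ennreal r > ennreal t} \<inter> {ennreal r<..}) / measure T {ennreal r<..}
               \<ge> measure T {ennreal t<..}))
    \<and> ((\<forall>R. reset_law R \<longrightarrow> stoch_le (reset_full T R) T)
      \<longleftrightarrow> (\<forall>R. reset_law R \<longrightarrow> stoch_le (reset_once T R) T))
    \<and> ((\<forall>R. reset_law R \<longrightarrow> stoch_le (reset_full T R) T)
      \<longleftrightarrow> (\<forall>r>0. stoch_le (reset_once T (dirac_law r)) T))

    \<and> ((\<forall>R. reset_law R \<longrightarrow> stoch_le T (reset_full T R))
      \<longleftrightarrow> (\<forall>r>0. stoch_le T (reset_full T (dirac_law r))))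
    \<and> ((\<forall>R. reset_law R \<longrightarrow> stoch_le T (reset_full T R))
      \<longleftrightarrow> (\<forall>x y. x \<ge> 0 \<longrightarrow> y \<ge> 0 \<longrightarrow> tail T (x + y) \<le> tail T x * tail T y))
    \<and> ((\<forall>R. reset_law R \<longrightarrow> stoch_le T (reset_full T R))
      \<longleftrightarrow> (\<forall>x y. x \<ge> 0 \<longrightarrow> y \<ge> 0 \<longrightarrow>
             neglog_tail T (x + y) \<ge> neglog_tail T x + neglog_tail T y))
    \<and> ((\<forall>R. reset_law R \<longrightarrow> stoch_le T (reset_full T R))
      \<longleftrightarrow> (\<forall>R. reset_law R \<longrightarrow> stoch_le T (reset_once T R)))
    \<and> ((\<forall>R. reset_law R \<longrightarrow> stoch_le T (reset_full T R))
      \<longleftrightarrow> (\<forall>r>0. stoch_le T (reset_once T (dirac_law r))))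

    \<and> ((\<forall>R. reset_law R \<longrightarrow> reset_full T R = T)
      \<longleftrightarrow> (\<forall>r>0. reset_full T (dirac_law r) = T))
    \<and> ((\<forall>R. reset_law R \<longrightarrow> reset_full T R = T)
      \<longleftrightarrow> (\<forall>x y. x \<ge> 0 \<longrightarrow> y \<ge> 0 \<longrightarrow> tail T (x + y) = tail T x * tail T y))
    \<and> ((\<forall>R. reset_law R \<longrightarrow> reset_full T R = T)
      \<longleftrightarrow> (\<forall>R. reset_law R \<longrightarrow> reset_once T R = T))
    \<and> ((\<forall>R. reset_law R \<longrightarrow> reset_full T R = T)
      \<longleftrightarrow> (\<forall>r>0. reset_once T (dirac_law r) = T))

    \<and> ((\<forall>x y. x \<ge> 0 \<longrightarrow> y \<ge> 0 \<longrightarrow> tail T (x + y) = tail T x * tail T y)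
      \<longleftrightarrow> (\<exists>l>0. T = Exp_law l))"
proof -
  interpret BT T by unfold_locales (rule assms)
  let ?ALE = "\<forall>R. reset_law R \<longrightarrow> stoch_le (reset_full T R) T"
  let ?AGE = "\<forall>R. reset_law R \<longrightarrow> stoch_le T (reset_full T R)"
  let ?AEQ = "\<forall>R. reset_law R \<longrightarrow> reset_full T R = T"
  let ?SM = "\<forall>x y. x \<ge> 0 \<longrightarrow> y \<ge> 0 \<longrightarrow> tail T (x + y) \<ge> tail T x * tail T y"
  let ?SB = "\<forall>x y. x \<ge> 0 \<longrightarrow> y \<ge> 0 \<longrightarrow> tail T (x + y) \<le> tail T x * tail T y"
  let ?MU = "\<forall>x y. x \<ge> 0 \<longrightarrow> y \<ge> 0 \<longrightarrow> tail T (x + y) = tail T x * tail T y"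
  have MU_iff: "?MU \<longleftrightarrow> ?SM \<and> ?SB"
  proof (rule iffI)
    assume M: "?MU"
    show "?SM \<and> ?SB"
    proof (intro conjI allI impI)
      fix x y :: real assume xy: "0 \<le> x" "0 \<le> y"
      then have e: "tail T (x + y) = tail T x * tail T y" using M by blast
      show "tail T x * tail T y \<le> tail T (x + y)" unfolding e by (rule order_refl)
    next
      fix x y :: real assume xy: "0 \<le> x" "0 \<le> y"
      then have e: "tail T (x + y) = tail T x * tail T y" using M by blast
      show "tail T (x + y) \<le> tail T x * tail T y" unfolding e by (rule order_refl)
    qed
  next
    assume h: "?SM \<and> ?SB"
    show ?MU
    proof (intro allI impI)
      fix x y :: real assume xy: "0 \<le> x" "0 \<le> y"
      have "tail T x * tail T y \<le> tail T (x + y)" using h xy by blast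
      moreover have "tail T (x + y) \<le> tail T x * tail T y" using h xy by blast
      ultimately show "tail T (x + y) = tail T x * tail T y" by (rule order_antisym[rotated])
    qed
  qed
  have dfl: "\<forall>r>0. P (dirac_law r)" if "\<forall>R. reset_law R \<longrightarrow> P R" for P
  proof (intro allI impI)
    fix r :: real assume "0 < r"
    then show "P (dirac_law r)" using that dirac_reset by blast
  qed
  have SMall: "\<forall>R. reset_law R \<longrightarrow> stoch_le (reset_full T R) T \<and> stoch_le (reset_once T R) T" if SM: ?SM
    using per_R_SM[OF _ SM] by blast
  have SBall: "\<forall>R. reset_law R \<longrightarrow> stoch_le T (reset_full T R) \<and> stoch_le T (reset_once T R)" if SB: ?SB
    using per_R_SUB[OF _ SB] by blast
  have ALE_SM: "?ALE \<longleftrightarrow> ?SM"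
  proof (rule iffI)
    assume A: ?ALE
    show ?SM by (rule dirac_full_le[OF dfl[OF A]])
  next
    assume ?SM then show ?ALE using SMall by blast
  qed
  have AGE_SB: "?AGE \<longleftrightarrow> ?SB"
  proof (rule iffI)
    assume A: ?AGE
    show ?SB by (rule dirac_full_ge[OF dfl[OF A]])
  next
    assume ?SB then show ?AGE using SBall by blast
  qed
  have a1: "(\<forall>r>0. stoch_le (reset_full T (dirac_law r)) T) \<longleftrightarrow> ?SM"
  proof (rule iffI)
    assume "\<forall>r>0. stoch_le (reset_full T (dirac_law r)) T" then show ?SM by (rule dirac_full_le)
  next
    assume ?SM then show "\<forall>r>0. stoch_le (reset_full T (dirac_law r)) T" using SMall dfl by blast
  qed
  have a4: "(\<forall>R. reset_law R \<longrightarrow> stoch_le (reset_once T R) T) \<longleftrightarrow> ?SM"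
  proof (rule iffI)
    assume A: "\<forall>R. reset_law R \<longrightarrow> stoch_le (reset_once T R) T" show ?SM by (rule dirac_once_le[OF dfl[OF A]])
  next
    assume ?SM then show "\<forall>R. reset_law R \<longrightarrow> stoch_le (reset_once T R) T" using SMall by blast
  qed
  have a5: "(\<forall>r>0. stoch_le (reset_once T (dirac_law r)) T) \<longleftrightarrow> ?SM"
  proof (rule iffI)
    assume "\<forall>r>0. stoch_le (reset_once T (dirac_law r)) T" then show ?SM by (rule dirac_once_le)
  next
    assume ?SM then show "\<forall>r>0. stoch_le (reset_once T (dirac_law r)) T" using SMall dfl by blast
  qed
  have b1: "(\<forall>r>0. stoch_le T (reset_full T (dirac_law r))) \<longleftrightarrow> ?SB"
  proof (rule iffI)
    assume "\<forall>r>0. stoch_le T (reset_full T (dirac_law r))" then show ?SB by (rule dirac_full_ge)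
  next
    assume ?SB then show "\<forall>r>0. stoch_le T (reset_full T (dirac_law r))" using SBall dfl by blast
  qed
  have b4: "(\<forall>R. reset_law R \<longrightarrow> stoch_le T (reset_once T R)) \<longleftrightarrow> ?SB"
  proof (rule iffI)
    assume A: "\<forall>R. reset_law R \<longrightarrow> stoch_le T (reset_once T R)" show ?SB by (rule dirac_once_ge[OF dfl[OF A]])
  next
    assume ?SB then show "\<forall>R. reset_law R \<longrightarrow> stoch_le T (reset_once T R)" using SBall by blast
  qed
  have b5: "(\<forall>r>0. stoch_le T (reset_once T (dirac_law r))) \<longleftrightarrow> ?SB"
  proof (rule iffI)
    assume "\<forall>r>0. stoch_le T (reset_once T (dirac_law r))" then show ?SB by (rule dirac_once_ge)
  next
    assume ?SB then show "\<forall>r>0. stoch_le T (reset_once T (dirac_law r))" using SBall dfl by blast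
  qed
  have full_eq: "reset_full T R = T" if "reset_law R" ?SM ?SB for R
  proof -
    interpret TRsetup T R using PT ST that(1) by (auto simp: TRsetup_def reset_law_def)
    show ?thesis by (rule stoch_antisym[OF G_prob G_sets PT ST per_R_SM(2)[OF that(1,2)] per_R_SUB(2)[OF that(1,3)]])
  qed
  have once_eq: "reset_once T R = T" if "reset_law R" ?SM ?SB for R
  proof -
    interpret TRsetup T R using PT ST that(1) by (auto simp: TRsetup_def reset_law_def)
    show ?thesis by (rule stoch_antisym[OF O_prob O_sets PT ST per_R_SM(1)[OF that(1,2)] per_R_SUB(1)[OF that(1,3)]])
  qed
  have eqle: "stoch_le A T \<and> stoch_le T A" if "A = T" for A using that by (simp add: stoch_refl)
  have c0: "?AEQ \<longleftrightarrow> ?MU"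
  proof (rule iffI)
    assume A: ?AEQ
    have "?ALE" "?AGE" using A eqle by blast+
    then show ?MU using ALE_SM AGE_SB MU_iff by blast
  next
    assume ?MU then have "?SM" "?SB" using MU_iff by blast+
    then show ?AEQ using full_eq by blast
  qed
  have c1: "(\<forall>r>0. reset_full T (dirac_law r) = T) \<longleftrightarrow> ?MU"
  proof (rule iffI)
    assume H: "\<forall>r>0. reset_full T (dirac_law r) = T"
    have h1: "\<forall>r>0. stoch_le (reset_full T (dirac_law r)) T" using H eqle by blast
    have h2: "\<forall>r>0. stoch_le T (reset_full T (dirac_law r))" using H eqle by blast
    show ?MU using dirac_full_le[OF h1] dirac_full_ge[OF h2] MU_iff by blast
  next
    assume ?MU then have "?SM" "?SB" using MU_iff by blast+
    then show "\<forall>r>0. reset_full T (dirac_law r) = T" using full_eq dirac_reset by blast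
  qed
  have c3: "(\<forall>R. reset_law R \<longrightarrow> reset_once T R = T) \<longleftrightarrow> ?MU"
  proof (rule iffI)
    assume H: "\<forall>R. reset_law R \<longrightarrow> reset_once T R = T"
    have h1: "\<forall>r>0. stoch_le (reset_once T (dirac_law r)) T" using dfl[OF H] eqle by blast
    have h2: "\<forall>r>0. stoch_le T (reset_once T (dirac_law r))" using dfl[OF H] eqle by blast
    show ?MU using dirac_once_le[OF h1] dirac_once_ge[OF h2] MU_iff by blast
  next
    assume ?MU then have "?SM" "?SB" using MU_iff by blast+
    then show "\<forall>R. reset_law R \<longrightarrow> reset_once T R = T" using once_eq by blast
  qed
  have c4: "(\<forall>r>0. reset_once T (dirac_law r) = T) \<longleftrightarrow> ?MU"
  proof (rule iffI)
    assume H: "\<forall>r>0. reset_once T (dirac_law r) = T"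
    have h1: "\<forall>r>0. stoch_le (reset_once T (dirac_law r)) T" using H eqle by blast
    have h2: "\<forall>r>0. stoch_le T (reset_once T (dirac_law r))" using H eqle by blast
    show ?MU using dirac_once_le[OF h1] dirac_once_ge[OF h2] MU_iff by blast
  next
    assume ?MU then have "?SM" "?SB" using MU_iff by blast+
    then show "\<forall>r>0. reset_once T (dirac_law r) = T" using once_eq dirac_reset by blast
  qed
  have ex: "?MU \<longleftrightarrow> (\<exists>l>0. T = Exp_law l)"
  proof (rule iffI)
    assume M: ?MU
    show "\<exists>l>0. T = Exp_law l" by (rule exp_of_mult[OF M])
  next
    assume "\<exists>l>0. T = Exp_law l"
    then obtain l where l: "0 < l" "T = Exp_law l" by blast
    have tl: "tail T t = exp (- l * t)" if "0 \<le> t" for t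
      using Exp_tail[OF l(1) that] l(2) by simp
    show ?MU
    proof (intro allI impI)
      fix x y :: real assume xy: "0 \<le> x" "0 \<le> y"
      have "tail T (x + y) = exp (- l * x + - l * y)" using tl[of "x + y"] xy by (simp add: algebra_simps)
      also have "\<dots> = exp (- l * x) * exp (- l * y)" by (rule exp_add)
      also have "\<dots> = tail T x * tail T y" using tl xy by simp
      finally show "tail T (x + y) = tail T x * tail T y" .
    qed
  qed
  show ?thesis
    by (simp only: ALE_SM AGE_SB a1 a4 a5 b1 b4 b5 c0 c1 c3 c4 ex neglog_sub_iff neglog_sup_iff cond_iff)
qed

end
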